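(* Let $\{X_n\}$ be an absorbing random leap on $\{0,\dots,N\}$ with $N\ge k_p+k_q$, and for $i\in\{0,\dots,N\}$ let $u_i=P(X_n=N\text{ for some }n\ge0\mid X_0=i)$. Then $\det(\mathbf A_N\mathbf Z)\neq0$ and \[ u_i=\frac{\det(\mathbf A_i\mathbf Z)}{\det(\mathbf A_N\mathbf Z)}\qquad\text{for every } i\in\{0,\dots,N\}. \]
   Context: Fix an integer $k\ge1$ and nonnegative reals $p_1,\dots,p_k,q_1,\dots,q_k$ with $\sum_{j=1}^k(p_j+q_j)=1$, $\sum_{j=1}^k p_j>0$ and $\sum_{j=1}^k q_j>0$. Let $k_p=\max\{j:p_j>0\}$ and $k_q=\max\{j:q_j>0\}$. Let $\xi$ be a random variable with $P(\xi=\ell)=p_\ell$ and $P(\xi=-\ell)=q_\ell$ for $1\le\ell\le k$. The simple random leap is the Markov chain on $\mathbb Z$ with $P(X_{n+1}=j\mid X_n=i)=P(\xi=j-i)$. For an integer $N\ge k_p+k_q$, the absorbing random leap is the Markov chain on $\{0,\dots,N\}$ in which $0$ and $N$ are absorbing and, for $0<i<N$: $P(i\to j)=P(i+\xi=j)$ for $1\le j\le N-1$, $P(i\to0)=P(i+\xi\le0)$, $P(i\to N)=P(i+\xi\ge N)$. Characteristic polynomial: $\chi(z)=\sum_{j=0}^{2k-1}c_jz^j$ where $c_j=-\sum_{\ell=k-j}^k q_\ell$ for $0\le j\le k-1$ and $c_j=\sum_{\ell=j-k+1}^k p_\ell$ for $k\le j\le 2k-1$. Counted with multiplicity, $\chi$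 has exactly $r:=k_p+k_q-1$ nonzero roots; let $z_1,\dots,z_s$ be the distinct nonzero roots with multiplicities $r_1,\dots,r_s$ ($\sum r_j=r$). For each $j$ let $\mathbf Z^{(j)}$ be the $(N+r-1)\times r_j$ matrix with entries $Z^{(j)}_{i,\ell}=(i+1-k_q)^{\ell-1}z_j^{\,i+1-k_q}$ ($1\le i\le N+r-1$, $1\le\ell\le r_j$), with the convention $0^0=1$, and let $\mathbf Z=(\mathbf Z^{(1)}\ \cdots\ \mathbf Z^{(s)})$, an $(N+r-1)\times r$ matrix. Accordion matrix: for $i\in\{0,\dots,N\}$, $\mathbf A_i$ is the $r\times(N+r-1)$ matrix whose first $k_q-1$ rows are the unit row vectors $\tilde e_1^T,\dots,\tilde e_{k_q-1}^T$, whose $k_q$-th row has ones in columns $k_q,\dots,k_q+i-1$ and zeros elsewhere, and whose last $k_p-1$ rows are the unit row vectors $\tilde e_{N+k_q}^T,\dots,\tilde e_{N+r-1}^T$ (here $\tilde e_m$ denotes the $m$-th unit vector of length $N+r-1$). In block form $\mathbf A_i=\begin{pmatrix}I_{k_q-1}&0&0&0\\0&\mathbf 1_i^T&\mathbf 0_{N-i}^T&0\\0&0&0&I_{k_p-1}\end{pmatrix}$. *)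

theory Defs
  imports Complex_Main "HOL-Computational_Algebra.Polynomial" "Jordan_Normal_Form.Determinant"
begin

definition xi_prob :: "nat \<Rightarrow> (nat \<Rightarrow> real) \<Rightarrow> (nat \<Rightarrow> real) \<Rightarrow> int \<Rightarrow> real" where
  "xi_prob k p q d =
     (if 1 \<le> d \<and> d \<le> int k then p (nat d)
      else if - int k \<le> d \<and> d \<le> -1 then q (nat (- d)) else 0)"

definition leap_trans :: "nat \<Rightarrow> (nat \<Rightarrow> real) \<Rightarrow> (nat \<Rightarrow> real) \<Rightarrow> nat \<Rightarrow> nat \<Rightarrow> nat \<Rightarrow> real" where
  "leap_trans k p q N i j =
     (if i = 0 \<or> i = N then (if j = i then 1 else 0)
      else if j = 0 then (\<Sum>d\<in>{- int k..- int i}. xi_prob k p q d)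
      else if j = N then (\<Sum>d\<in>{int N - int i..int k}. xi_prob k p q d)
      else if j < N then xi_prob k p q (int j - int i)
      else 0)"

text \<open>hit_within P M t n i = probability that a Markov chain on {0..M} with transition
  matrix P, started at i, visits t at some time 0..n (Markov property recursion).\<close>
fun hit_within :: "(nat \<Rightarrow> nat \<Rightarrow> real) \<Rightarrow> nat \<Rightarrow> nat \<Rightarrow> nat \<Rightarrow> nat \<Rightarrow> real" where
  "hit_within P M t 0 i = (if i = t then 1 else 0)"
| "hit_within P M t (Suc n) i =
     (if i = t then 1 else (\<Sum>j\<le>M. P i j * hit_within P M t n j))"

text \<open>u_i = P(X_n = N for some n \<ge> 0 | X_0 = i), the limit of the probabilities of
  the increasing events "X_n = N for some n \<le> m".\<close>
definition absorb_prob :: "nat \<Rightarrow> (nat \<Rightarrow> real) \<Rightarrow> (nat \<Rightarrow> real) \<Rightarrow> nat \<Rightarrow> nat \<Rightarrow> real" where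
  "absorb_prob k p q N i = lim (\<lambda>m. hit_within (leap_trans k p q N) N N m i)"

definition kp :: "nat \<Rightarrow> (nat \<Rightarrow> real) \<Rightarrow> nat" where
  "kp k p = Max {j \<in> {1..k}. p j > 0}"

definition kq :: "nat \<Rightarrow> (nat \<Rightarrow> real) \<Rightarrow> nat" where
  "kq k q = Max {j \<in> {1..k}. q j > 0}"

definition char_coeff :: "nat \<Rightarrow> (nat \<Rightarrow> real) \<Rightarrow> (nat \<Rightarrow> real) \<Rightarrow> nat \<Rightarrow> real" where
  "char_coeff k p q j =
     (if j \<le> k - 1 then - (\<Sum>l\<in>{k - j..k}. q l)
      else (\<Sum>l\<in>{j - k + 1..k}. p l))"

definition char_poly :: "nat \<Rightarrow> (nat \<Rightarrow> real) \<Rightarrow> (nat \<Rightarrow> real) \<Rightarrow> complex poly" where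
  "char_poly k p q = Poly (map (\<lambda>j. complex_of_real (char_coeff k p q j)) [0..<2 * k])"

definition Z_cols :: "complex poly \<Rightarrow> complex list \<Rightarrow> (complex \<times> nat) list" where
  "Z_cols chi zs = concat (map (\<lambda>z. map (\<lambda>l. (z, l)) [1..<order z chi + 1]) zs)"

text \<open>The (N+r-1) x r matrix Z (rows 1..N+r-1, stored 0-indexed).\<close>
definition Z_mat :: "nat \<Rightarrow> nat \<Rightarrow> nat \<Rightarrow> complex poly \<Rightarrow> complex list \<Rightarrow> complex mat" where
  "Z_mat kq' r N chi zs =
     mat (N + r - 1) (length (Z_cols chi zs))
       (\<lambda>(i0, c). let i = int i0 + 1; e = i + 1 - int kq'; (z, l) = Z_cols chi zs ! c
                  in (of_int e) ^ (l - 1) * z powi e)"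

text \<open>The accordion matrix A_i, an r x (N+r-1) matrix (1-indexed rows a, columns m
  in the comment; stored 0-indexed).\<close>
definition accordion :: "nat \<Rightarrow> nat \<Rightarrow> nat \<Rightarrow> nat \<Rightarrow> complex mat" where
  "accordion kq' kp' N i =
     mat (kp' + kq' - 1) (N + (kp' + kq' - 1) - 1)
       (\<lambda>(a0, m0). let a = a0 + 1; m = m0 + 1 in
          if a < kq' then (if m = a then 1 else 0)
          else if a = kq' then (if kq' \<le> m \<and> m \<le> kq' + i - 1 then 1 else 0)
          else (if m = N + a - 1 then 1 else 0))"

end

theory Submission
  imports Defs "HOL-Computational_Algebra.Fundamental_Theorem_Algebra"
begin


lemma pcomp_shift_poly: "poly (pcompose P [:1,1:]) (x::complex) = poly P (x + 1)"
  by (simp add: poly_pcompose add.commute)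

lemma pcomp_shift_degree: "degree (pcompose P [:(1::complex), 1:]) = degree P"
  by (simp add: degree_pcompose)

lemma pcomp_shift_lc: "lead_coeff (pcompose P [:(1::complex),1:]) = lead_coeff P"
  by (simp add: lead_coeff_comp)

lemma coeff_zero_above:
  fixes p :: "complex poly"
  assumes "p \<noteq> 0" "\<forall>n\<ge>m. coeff p n = 0" shows "degree p < m"
proof (rule ccontr)
  assume "\<not> degree p < m"
  hence "coeff p (degree p) = 0" using assms(2) by auto
  thus False using assms(1) by simp
qed

lemma shift_const:
  fixes P :: "complex poly"
  assumes "pcompose P [:1,1:] = P"
  shows "P = [:poly P 0:]"
proof -
  have h: "poly P (of_nat n) = poly P 0" for n
  proof (induction n)
    case (Suc n)
    have "poly P (of_nat (Suc n)) = poly P (of_nat n + 1)" by (simp add: add.commute)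
    also have "\<dots> = poly (pcompose P [:1,1:]) (of_nat n)" by (simp only: pcomp_shift_poly)
    also have "\<dots> = poly P (of_nat n)" using assms by simp
    finally show ?case using Suc by simp
  qed simp
  define D where "D = P - [:poly P 0:]"
  have sub: "range (of_nat :: nat \<Rightarrow> complex) \<subseteq> {x. poly D x = 0}" using h unfolding D_def by auto
  have inf: "infinite (range (of_nat :: nat \<Rightarrow> complex))"
    by (rule range_inj_infinite) (rule injI, simp)
  have "infinite {x. poly D x = 0}" using finite_subset[OF sub] inf by blast
  hence "D = 0" using poly_roots_finite[of D] by auto
  thus ?thesis unfolding D_def by simp
qed

lemma indep_expo:
  fixes S :: "complex set" and Pz :: "complex \<Rightarrow> complex poly" and m :: "complex \<Rightarrow> nat"
  assumes "finite S" "0 \<notin> S" "\<forall>z\<in>S. \<forall>n\<ge>m z. coeff (Pz z) n = 0" "(\<Sum>z\<in>S. m z) \<le> L"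
    "\<forall>t<L. (\<Sum>z\<in>S. poly (Pz z) (of_int (ee + int t)) * z powi (ee + int t)) = 0"
  shows "\<forall>z\<in>S. Pz z = 0"
  using assms(3-5)
proof (induction "sum m S" arbitrary: m Pz L ee rule: less_induct)
  case less
  show ?case
  proof (cases "\<forall>z\<in>S. m z = 0")
    case True
    then show ?thesis using less.prems(1) by (auto intro: poly_eqI)
  next
    case False
    then obtain z1 where z1: "z1 \<in> S" "m z1 > 0" by auto
    have z1nz: "z1 \<noteq> 0" using z1 assms(2) by auto
    have "m z1 \<le> sum m S" using z1 assms(1) by (intro member_le_sum) auto
    hence L1: "L \<ge> 1" using less.prems(2) z1 by linarith
    define m' where "m' = m(z1 := m z1 - 1)"
    define Q where "Q = (\<lambda>z. if z = z1 then smult z1 (pcompose (Pz z) [:1,1:] - Pz z)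
        else smult z (pcompose (Pz z) [:1,1:]) - smult z1 (Pz z))"
    have sm: "sum m S = sum m' S + 1"
    proof -
      have "sum m S = m z1 + sum m (S - {z1})" using z1 assms(1) by (simp add: sum.remove)
      moreover have "sum m' S = m' z1 + sum m' (S - {z1})" using z1 assms(1) by (simp add: sum.remove)
      moreover have "sum m' (S - {z1}) = sum m (S - {z1})" unfolding m'_def by (intro sum.cong) auto
      ultimately show ?thesis using z1 unfolding m'_def by simp
    qed
    have cQ: "\<forall>z\<in>S. \<forall>n\<ge>m' z. coeff (Q z) n = 0"
    proof (intro ballI allI impI)
      fix z n assume zS: "z \<in> S" and n: "m' z \<le> n"
      show "coeff (Q z) n = 0"
      proof (cases "z = z1")
        case True
        show ?thesis
        proof (cases "Pz z = 0 \<or> degree (Pz z) = 0")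
          case True
          then obtain c where "Pz z = [:c:]" by (metis degree_eq_zeroE pCons_0_0)
          then show ?thesis using \<open>z = z1\<close> unfolding Q_def by simp
        next
          case False
          hence nz: "Pz z \<noteq> 0" and dpos: "degree (Pz z) > 0" by auto
          have "degree (Pz z) < m z" using coeff_zero_above[OF nz] less.prems(1) zS by auto
          hence nd: "n \<ge> degree (Pz z)" using n True unfolding m'_def by auto
          show ?thesis
          proof (cases "n = degree (Pz z)")
            case True
            have "coeff (pcompose (Pz z) [:1,1:]) n = coeff (Pz z) n"
              using pcomp_shift_lc[of "Pz z"] pcomp_shift_degree[of "Pz z"] True by simp
            then show ?thesis unfolding Q_def using \<open>z = z1\<close> by simp
          next
            case False
            hence "n > degree (Pz z)" using nd by auto
            then show ?thesis unfolding Q_def using \<open>z = z1\<close> pcomp_shift_degree[of "Pz z"]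
              by (simp add: coeff_eq_0)
          qed
        qed
      next
        case False
        have "coeff (Pz z) n = 0" using less.prems(1) zS n False unfolding m'_def by auto
        moreover have "coeff (pcompose (Pz z) [:1,1:]) n = 0"
        proof (cases "Pz z = 0")
          case False
          have "degree (Pz z) < m z" using coeff_zero_above[OF False] less.prems(1) zS by auto
          then show ?thesis using n \<open>z \<noteq> z1\<close> pcomp_shift_degree[of "Pz z"] unfolding m'_def
            by (simp add: coeff_eq_0)
        qed simp
        ultimately show ?thesis unfolding Q_def using False by simp
      qed
    qed
    have sQ: "sum m' S \<le> L - 1" using sm less.prems(2) by simp
    have vQ: "\<forall>t<L - 1. (\<Sum>z\<in>S. poly (Q z) (of_int (ee + int t)) * z powi (ee + int t)) = 0"
    proof (intro allI impI)
      fix t assume t: "t < L - 1"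
      define e where "e = ee + int t"
      have e1: "ee + int (Suc t) = e + 1" unfolding e_def by simp
      have "(\<Sum>z\<in>S. poly (Q z) (of_int e) * z powi e) =
        (\<Sum>z\<in>S. poly (Pz z) (of_int (e + 1)) * z powi (e + 1)) -
        z1 * (\<Sum>z\<in>S. poly (Pz z) (of_int e) * z powi e)"
        unfolding sum_distrib_left sum_subtractf[symmetric]
      proof (intro sum.cong refl)
        fix z assume zS: "z \<in> S"
        have znz: "z \<noteq> 0" using zS assms(2) by auto
        have pw: "z powi (e + 1) = z * z powi e" using znz by (simp add: power_int_add)
        show "poly (Q z) (of_int e) * z powi e =
          poly (Pz z) (of_int (e + 1)) * z powi (e + 1) - z1 * (poly (Pz z) (of_int e) * z powi e)"
          unfolding Q_def pw by (auto simp: pcomp_shift_poly algebra_simps)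
      qed
      also have "\<dots> = 0"
      proof -
        have a: "(\<Sum>z\<in>S. poly (Pz z) (of_int (e + 1)) * z powi (e + 1)) = 0"
          using less.prems(3)[rule_format, of "Suc t", unfolded e1] t by simp
        have b: "(\<Sum>z\<in>S. poly (Pz z) (of_int e) * z powi e) = 0"
          using less.prems(3)[rule_format, of t] t unfolding e_def by simp
        show ?thesis using a b by simp
      qed
      finally show "(\<Sum>z\<in>S. poly (Q z) (of_int (ee + int t)) * z powi (ee + int t)) = 0"
        unfolding e_def .
    qed
    have Q0: "\<forall>z\<in>S. Q z = 0"
      by (rule less.hyps[OF _ cQ sQ vQ]) (use sm in simp)
    have oth: "Pz z = 0" if zS: "z \<in> S" and zn: "z \<noteq> z1" for z
    proof (rule ccontr)
      assume nz: "Pz z \<noteq> 0"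
      have "coeff (Q z) (degree (Pz z)) = (z - z1) * lead_coeff (Pz z)"
        unfolding Q_def using zn pcomp_shift_lc[of "Pz z"] pcomp_shift_degree[of "Pz z"]
        by (simp add: algebra_simps)
      moreover have "(z - z1) * lead_coeff (Pz z) \<noteq> 0" using nz zn by simp
      ultimately show False using Q0 zS by simp
    qed
    have "Q z1 = 0" using Q0 z1 by blast
    hence "smult z1 (pcompose (Pz z1) [:1,1:] - Pz z1) = 0" unfolding Q_def by simp
    hence "pcompose (Pz z1) [:1,1:] - Pz z1 = 0" using z1nz by simp
    hence Pc: "Pz z1 = [:poly (Pz z1) 0:]" using shift_const by simp
    define c where "c = poly (Pz z1) 0"
    have "(\<Sum>z\<in>S. poly (Pz z) (of_int ee) * z powi ee) = poly (Pz z1) (of_int ee) * z1 powi ee"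
      using z1 assms(1) oth by (subst sum.remove[of S z1]) auto
    moreover have "(\<Sum>z\<in>S. poly (Pz z) (of_int ee) * z powi ee) = 0"
      using less.prems(3)[rule_format, of 0] L1 by simp
    ultimately have "c * z1 powi ee = 0" using Pc unfolding c_def by (metis poly_pCons poly_0 mult_zero_right add.right_neutral)
    hence "c = 0" using z1nz by simp
    hence "Pz z1 = 0" using Pc unfolding c_def by simp
    with oth show ?thesis by auto
  qed
qed




definition theta :: "complex poly \<Rightarrow> complex poly" where
  "theta p = pCons 0 (pderiv p)"

lemma coeff_theta: "coeff (theta p) n = of_nat n * coeff p n"
  unfolding theta_def by (cases n) (auto simp: coeff_pderiv)

lemma coeff_theta_pow: "coeff ((theta ^^ s) p) n = of_nat n ^ s * coeff p n"
  by (induction s) (auto simp: coeff_theta)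

lemma degree_theta_pow: "degree ((theta ^^ s) p) \<le> degree p"
  by (rule degree_le) (auto simp: coeff_theta_pow coeff_eq_0)

lemma theta_dvd:
  assumes "[:-z,1:] ^ Suc s dvd p"
  shows "[:-z,1:] ^ s dvd theta p"
proof (cases "pderiv p = 0")
  case True
  then show ?thesis unfolding theta_def by simp
next
  case False
  hence pnz: "p \<noteq> 0" by auto
  have o: "Suc s \<le> order z p" using assms pnz order_divides by blast
  hence "order z p \<noteq> 0" by auto
  hence "order z p = Suc (order z (pderiv p))"
    using order_pderiv[OF pnz] order_root pnz by blast
  hence "s \<le> order z (pderiv p)" using o by simp
  hence "[:-z,1:] ^ s dvd pderiv p" using order_divides by blast
  moreover have e: "theta p = [:0,1:] * pderiv p" unfolding theta_def by (simp add: mult_pCons_left)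
  have "pderiv p dvd theta p" unfolding e by (rule dvd_triv_right)
  ultimately show ?thesis using dvd_trans by blast
qed

lemma theta_pow_dvd:
  assumes "s \<le> order z p"
  shows "[:-z,1:] ^ (order z p - s) dvd (theta ^^ s) p"
  using assms
proof (induction s)
  case 0
  then show ?case by (simp add: order_1)
next
  case (Suc s)
  have "order z p - s = Suc (order z p - Suc s)" using Suc.prems by simp
  then show ?case using Suc theta_dvd by (metis Suc_leD funpow.simps(2) o_apply)
qed

lemma poly_sum_bound:
  fixes q :: "complex poly"
  assumes "degree q < n"
  shows "poly q z = (\<Sum>j<n. coeff q j * z ^ j)"
proof -
  have "poly q z = (\<Sum>j\<le>degree q. coeff q j * z ^ j)" by (rule Polynomial.poly_altdef)
  also have "\<dots> = (\<Sum>j<n. coeff q j * z ^ j)"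
    by (rule sum.mono_neutral_left) (use assms in \<open>auto simp: coeff_eq_0\<close>)
  finally show ?thesis .
qed

lemma root_moment:
  fixes chi :: "complex poly"
  assumes "chi \<noteq> 0" "degree chi < n" "z \<noteq> 0" "l \<ge> 1" "l \<le> order z chi"
  shows "(\<Sum>j<n. coeff chi j * (of_int (e + int j)) ^ (l - 1) * z powi (e + int j)) = 0"
proof -
  define M where "M = l - 1"
  have MO: "M < order z chi" using assms unfolding M_def by simp
  have inner: "(\<Sum>j<n. coeff chi j * of_nat j ^ s * z ^ j) = 0" if "s \<le> M" for s
  proof -
    have "(\<Sum>j<n. coeff chi j * of_nat j ^ s * z ^ j) = poly ((theta ^^ s) chi) z"
      using poly_sum_bound[of "(theta ^^ s) chi" n z] degree_theta_pow[of s chi] assms(2)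
      by (simp add: coeff_theta_pow mult_ac)
    also have "\<dots> = 0"
    proof -
      have d1: "[:-z,1:] ^ (order z chi - s) dvd (theta ^^ s) chi"
        using theta_pow_dvd that MO by simp
      have "[:-z,1:] dvd [:-z,1:] ^ (order z chi - s)" 
        using that MO by (intro dvd_power) auto
      hence "[:-z,1:] dvd (theta ^^ s) chi" using d1 dvd_trans by blast
      thus ?thesis using poly_eq_0_iff_dvd by blast
    qed
    finally show ?thesis .
  qed
  have "(\<Sum>j<n. coeff chi j * (of_int (e + int j)) ^ M * z powi (e + int j)) =
     (\<Sum>j<n. coeff chi j * (\<Sum>s\<le>M. of_nat (M choose s) * of_nat j ^ s * of_int e ^ (M - s))
         * (z powi e * z ^ j))"
  proof (intro sum.cong refl)
    fix j assume "j \<in> {..<n}"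
    have a: "(of_int (e + int j) :: complex) = of_nat j + of_int e" by simp
    have b: "z powi (e + int j) = z powi e * z ^ j" using assms(3) by (simp add: power_int_add)
    show "coeff chi j * (of_int (e + int j)) ^ M * z powi (e + int j) =
        coeff chi j * (\<Sum>s\<le>M. of_nat (M choose s) * of_nat j ^ s * of_int e ^ (M - s)) *
        (z powi e * z ^ j)" unfolding a b binomial_ring by simp
  qed
  also have "\<dots> = (\<Sum>s\<le>M. of_nat (M choose s) * of_int e ^ (M - s) * z powi e *
        (\<Sum>j<n. coeff chi j * of_nat j ^ s * z ^ j))"
    by (simp add: sum_distrib_left sum_distrib_right mult_ac sum.swap[of _ "{..<n}"])
  also have "\<dots> = 0" using inner by simp
  finally show ?thesis unfolding M_def .
qed




locale leap =
  fixes k N :: nat and p q :: "nat \<Rightarrow> real"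
  assumes k1: "k \<ge> 1" and pnn: "\<forall>j\<in>{1..k}. p j \<ge> 0" and qnn: "\<forall>j\<in>{1..k}. q j \<ge> 0"
    and tot: "(\<Sum>j=1..k. p j + q j) = 1" and ps: "(\<Sum>j=1..k. p j) > 0"
    and qs: "(\<Sum>j=1..k. q j) > 0" and Nb: "N \<ge> kp k p + kq k q"
begin

abbreviation "KP \<equiv> kp k p"
abbreviation "KQ \<equiv> kq k q"
abbreviation "xi \<equiv> xi_prob k p q"
abbreviation "P \<equiv> leap_trans k p q N"

lemma max_props:
  fixes f :: "nat \<Rightarrow> real"
  assumes nn: "\<forall>j\<in>{1..k}. f j \<ge> 0" and s: "(\<Sum>j=1..k. f j) > 0"
  shows "1 \<le> Max {j \<in> {1..k}. f j > 0}" "Max {j \<in> {1..k}. f j > 0} \<le> k"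
    "f (Max {j \<in> {1..k}. f j > 0}) > 0"
    "\<And>j. Max {j \<in> {1..k}. f j > 0} < j \<Longrightarrow> j \<le> k \<Longrightarrow> f j = 0"
proof -
  let ?S = "{j \<in> {1..k}. f j > 0}"
  have fin: "finite ?S" by auto
  have ne: "?S \<noteq> {}"
  proof
    assume "?S = {}"
    hence "\<forall>j\<in>{1..k}. f j \<le> 0" by auto
    hence "(\<Sum>j=1..k. f j) \<le> 0" by (intro sum_nonpos) auto
    thus False using s by simp
  qed
  have mi: "Max ?S \<in> ?S" using Max_in[OF fin ne] .
  thus "1 \<le> Max ?S" "Max ?S \<le> k" "f (Max ?S) > 0" by auto
  show "f j = 0" if "Max ?S < j" "j \<le> k" for j
  proof (rule ccontr)
    assume "f j \<noteq> 0"
    have j1: "j \<in> {1..k}" using that mi by auto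
    hence "f j > 0" using nn \<open>f j \<noteq> 0\<close> by (simp add: order_less_le)
    hence "j \<in> ?S" using j1 by blast
    hence "j \<le> Max ?S" using fin by simp
    thus False using that by simp
  qed
qed

lemma KP_props: "1 \<le> KP" "KP \<le> k" "p KP > 0" "\<And>j. KP < j \<Longrightarrow> j \<le> k \<Longrightarrow> p j = 0"
  unfolding kp_def by (rule max_props[OF pnn ps])+

lemma KQ_props: "1 \<le> KQ" "KQ \<le> k" "q KQ > 0" "\<And>j. KQ < j \<Longrightarrow> j \<le> k \<Longrightarrow> q j = 0"
  unfolding kq_def by (rule max_props[OF qnn qs])+

lemma N2: "N \<ge> 2" using Nb KP_props(1) KQ_props(1) by simp

lemma xi_nn: "xi d \<ge> 0"
proof -
  have "0 \<le> p (nat d)" if "1 \<le> d" "d \<le> int k" using pnn that by (simp add: nat_le_iff)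
  moreover have "0 \<le> q (nat (-d))" if "- int k \<le> d" "d \<le> -1" using qnn that by (simp add: nat_le_iff)
  ultimately show ?thesis unfolding xi_prob_def by auto
qed

lemma xi_pos: "xi (int j) = p j" if "j \<in> {1..k}" for j
  using that unfolding xi_prob_def by auto

lemma xi_neg: "xi (- int j) = q j" if "j \<in> {1..k}" for j
  using that unfolding xi_prob_def by auto

lemma xi_out: "xi d = 0" if dd: "d < - int KQ \<or> d > int KP \<or> d = 0" for d
proof -
  consider "d = 0" | "d > int KP" | "d < - int KQ" using dd by blast
  then show ?thesis
  proof cases
    case 2
    show ?thesis
    proof (cases "d \<le> int k")
      case True
      have "p (nat d) = 0" using KP_props(4)[of "nat d"] 2 True by simp
      then show ?thesis unfolding xi_prob_def using 2 True KP_props by auto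
    qed (auto simp: xi_prob_def)
  next
    case 3
    show ?thesis
    proof (cases "- int k \<le> d")
      case True
      have "q (nat (-d)) = 0" using KQ_props(4)[of "nat (-d)"] 3 True by simp
      then show ?thesis unfolding xi_prob_def using 3 True KQ_props by auto
    qed (auto simp: xi_prob_def)
  qed (auto simp: xi_prob_def)
qed

lemma xi_out2: "xi d = 0" if "d \<notin> {- int k..int k}" for d
  using that unfolding xi_prob_def by auto

lemma xi_expand:
  fixes F :: "int \<Rightarrow> 'a::real_vector"
  shows "(\<Sum>d\<in>{- int k..int k}. xi d *\<^sub>R F d) =
    (\<Sum>j=1..k. p j *\<^sub>R F (int j)) + (\<Sum>j=1..k. q j *\<^sub>R F (- int j))"
proof -
  let ?A = "(\<lambda>j. - int j) ` {1..k}" and ?B = "int ` {1..k}"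
  have S: "{- int k..int k} = ?B \<union> (?A \<union> {0})"
  proof (intro equalityI subsetI)
    fix x assume x: "x \<in> {- int k..int k}"
    show "x \<in> ?B \<union> (?A \<union> {0})"
    proof (cases "x > 0")
      case True
      hence "x = int (nat x)" "nat x \<in> {1..k}" using x by auto
      then show ?thesis by blast
    next
      case False
      show ?thesis
      proof (cases "x = 0")
        case False
        hence "x = - int (nat (-x))" "nat (-x) \<in> {1..k}" using x \<open>\<not> x > 0\<close> by auto
        then show ?thesis by blast
      qed simp
    qed
  qed auto
  have "(\<Sum>d\<in>{- int k..int k}. xi d *\<^sub>R F d) =
     (\<Sum>d\<in>?B. xi d *\<^sub>R F d) + ((\<Sum>d\<in>?A. xi d *\<^sub>R F d) + (\<Sum>d\<in>{0}. xi d *\<^sub>R F d))"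
    unfolding S by (subst sum.union_disjoint; (subst sum.union_disjoint)?; auto)
  also have "(\<Sum>d\<in>?B. xi d *\<^sub>R F d) = (\<Sum>j=1..k. p j *\<^sub>R F (int j))"
    by (subst sum.reindex) (auto intro!: sum.cong simp: xi_pos)
  also have "(\<Sum>d\<in>?A. xi d *\<^sub>R F d) = (\<Sum>j=1..k. q j *\<^sub>R F (- int j))"
    by (subst sum.reindex) (auto intro!: sum.cong simp: xi_neg inj_on_def)
  also have "(\<Sum>d\<in>{0}. xi d *\<^sub>R F d) = 0" by (simp add: xi_prob_def)
  finally show ?thesis by simp
qed

lemma xi_sum: "(\<Sum>d\<in>{- int k..int k}. xi d) = 1"
  using xi_expand[of "\<lambda>_. 1::real"] tot by (simp add: sum.distrib)

definition clip :: "int \<Rightarrow> nat" where "clip x = nat (min (int N) x)"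

lemma P_expand:
  fixes f :: "nat \<Rightarrow> 'a::real_vector"
  assumes i: "0 < i" "i < N"
  shows "(\<Sum>j\<le>N. P i j *\<^sub>R f j) = (\<Sum>d\<in>{- int k..int k}. xi d *\<^sub>R f (clip (int i + d)))"
proof -
  let ?S = "{- int k..int k}"
  define A where "A = {- int k..- int i}"
  define B where "B = ?S \<inter> {- int i<..<int N - int i}"
  define C where "C = {int N - int i..int k}"
  have S: "?S = A \<union> (B \<union> C)" unfolding A_def B_def C_def using i by auto
  have RHS: "(\<Sum>d\<in>?S. xi d *\<^sub>R f (clip (int i + d))) =
     (\<Sum>d\<in>A. xi d *\<^sub>R f (clip (int i + d))) + ((\<Sum>d\<in>B. xi d *\<^sub>R f (clip (int i + d))) +
      (\<Sum>d\<in>C. xi d *\<^sub>R f (clip (int i + d))))"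
    unfolding S using i by (subst sum.union_disjoint; (subst sum.union_disjoint)?; auto simp: A_def B_def C_def)
  have N0: "N \<noteq> 0" using i by simp
  have "{..N} = {0} \<union> ({1..<N} \<union> {N})" using i by auto
  hence LHS: "(\<Sum>j\<le>N. P i j *\<^sub>R f j) = P i 0 *\<^sub>R f 0 + ((\<Sum>j\<in>{1..<N}. P i j *\<^sub>R f j) + P i N *\<^sub>R f N)"
    using i by (simp add: sum.union_disjoint)
  have a: "(\<Sum>d\<in>A. xi d *\<^sub>R f (clip (int i + d))) = P i 0 *\<^sub>R f 0"
  proof -
    have "(\<Sum>d\<in>A. xi d *\<^sub>R f (clip (int i + d))) = (\<Sum>d\<in>A. xi d *\<^sub>R f 0)"
      by (intro sum.cong refl) (auto simp: A_def clip_def)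
    also have "\<dots> = (\<Sum>d\<in>A. xi d) *\<^sub>R f 0" by (simp add: scaleR_sum_left)
    also have "(\<Sum>d\<in>A. xi d) = P i 0" unfolding A_def leap_trans_def using i by simp
    finally show ?thesis .
  qed
  have c: "(\<Sum>d\<in>C. xi d *\<^sub>R f (clip (int i + d))) = P i N *\<^sub>R f N"
  proof -
    have "(\<Sum>d\<in>C. xi d *\<^sub>R f (clip (int i + d))) = (\<Sum>d\<in>C. xi d *\<^sub>R f N)"
      by (intro sum.cong refl) (auto simp: C_def clip_def)
    also have "\<dots> = (\<Sum>d\<in>C. xi d) *\<^sub>R f N" by (simp add: scaleR_sum_left)
    also have "(\<Sum>d\<in>C. xi d) = P i N" unfolding C_def leap_trans_def using i by simp
    finally show ?thesis .
  qed
  have b: "(\<Sum>d\<in>B. xi d *\<^sub>R f (clip (int i + d))) = (\<Sum>j\<in>{1..<N}. P i j *\<^sub>R f j)"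
  proof -
    have "(\<Sum>j\<in>{1..<N}. P i j *\<^sub>R f j) = (\<Sum>j\<in>{1..<N}. xi (int j - int i) *\<^sub>R f j)"
      by (intro sum.cong refl) (use i in \<open>auto simp: leap_trans_def\<close>)
    also have "\<dots> = (\<Sum>d\<in>(\<lambda>j. int j - int i) ` {1..<N}. xi d *\<^sub>R f (clip (int i + d)))"
      by (subst sum.reindex) (auto simp: inj_on_def clip_def intro!: sum.cong)
    also have "(\<lambda>j. int j - int i) ` {1..<N} = {- int i<..<int N - int i}"
    proof (intro equalityI subsetI)
      fix x assume "x \<in> {- int i<..<int N - int i}"
      hence "x = int (nat (int i + x)) - int i" "nat (int i + x) \<in> {1..<N}" by auto
      thus "x \<in> (\<lambda>j. int j - int i) ` {1..<N}" by blast
    qed auto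
    also have "(\<Sum>d\<in>{- int i<..<int N - int i}. xi d *\<^sub>R f (clip (int i + d))) =
        (\<Sum>d\<in>B. xi d *\<^sub>R f (clip (int i + d)))"
      unfolding B_def by (rule sum.mono_neutral_right) (use xi_out2 in force)+
    finally show ?thesis by simp
  qed
  show ?thesis unfolding LHS RHS a b c ..
qed

end



context leap begin

lemma P_nn: "P i j \<ge> 0"
  unfolding leap_trans_def using xi_nn by (auto intro: sum_nonneg)

lemma row_sum: "i \<le> N \<Longrightarrow> (\<Sum>j\<le>N. P i j) = 1"
proof -
  assume iN: "i \<le> N"
  show ?thesis
  proof (cases "i = 0 \<or> i = N")
    case True
    hence "(\<Sum>j\<le>N. P i j) = (\<Sum>j\<le>N. if j = i then 1 else 0)"
      by (intro sum.cong refl) (auto simp: leap_trans_def)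
    also have "\<dots> = 1" using iN by simp
    finally show ?thesis .
  next
    case False
    hence i: "0 < i" "i < N" using iN by auto
    have "(\<Sum>j\<le>N. P i j) = (\<Sum>j\<le>N. P i j *\<^sub>R (1::real))" by simp
    also have "\<dots> = (\<Sum>d\<in>{- int k..int k}. xi d *\<^sub>R (1::real))" by (rule P_expand[OF i])
    also have "\<dots> = 1" using xi_sum by simp
    finally show ?thesis .
  qed
qed

lemma P_pos: assumes i: "0 < i" "i < N" shows "P i (min (i + KP) N) > 0"
proof (cases "i + KP < N")
  case True
  have "P i (i + KP) = xi (int KP)" using True i KP_props(1)
    by (simp add: leap_trans_def)
  also have "\<dots> = p KP" using KP_props by (intro xi_pos) auto
  finally show ?thesis using True KP_props(3) by simp
next
  case False
  have "P i N = (\<Sum>d\<in>{int N - int i..int k}. xi d)" using i by (simp add: leap_trans_def)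
  also have "\<dots> \<ge> xi (int KP)"
    by (rule member_le_sum) (use False KP_props(2) xi_nn in auto)
  finally have "P i N \<ge> p KP" using xi_pos[of KP] KP_props by simp
  then show ?thesis using False KP_props(3) by simp
qed

lemma harm_max:
  fixes h :: "nat \<Rightarrow> real"
  assumes h0: "h 0 \<le> 0" and hN: "h N \<le> 0"
    and harm: "\<forall>i. 0 < i \<and> i < N \<longrightarrow> h i = (\<Sum>j\<le>N. P i j * h j)"
  shows "\<forall>i\<le>N. h i \<le> 0"
proof (rule ccontr)
  assume "\<not> (\<forall>i\<le>N. h i \<le> 0)"
  then obtain i1 where i1: "i1 \<le> N" "h i1 > 0" by auto
  define M where "M = Max (h ` {..N})"
  have fin: "finite (h ` {..N})" by simp
  have hM: "h j \<le> M" if "j \<le> N" for j unfolding M_def using fin that by (intro Max_ge) auto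
  have "M \<in> h ` {..N}" unfolding M_def by (rule Max_in) auto
  then obtain i0 where i0: "i0 \<le> N" "h i0 = M" by auto
  have Mpos: "M > 0" using hM[OF i1(1)] i1 by simp
  have step: "h (min (i + KP) N) = M" if hi: "h i = M" "i \<le> N" for i
  proof -
    have n0: "i \<noteq> 0"
    proof
      assume "i = 0" thus False using hi Mpos h0 by simp
    qed
    have nN: "i \<noteq> N"
    proof
      assume "i = N" thus False using hi Mpos hN by simp
    qed
    have ii: "0 < i" "i < N" using n0 nN hi(2) by auto
    have "(\<Sum>j\<le>N. P i j * (M - h j)) = M * (\<Sum>j\<le>N. P i j) - (\<Sum>j\<le>N. P i j * h j)"
      by (simp add: algebra_simps sum_subtractf sum_distrib_left)
    also have "\<dots> = 0" using row_sum[of i] ii harm hi by simp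
    finally have z: "(\<Sum>j\<le>N. P i j * (M - h j)) = 0" .
    have "\<forall>j\<in>{..N}. P i j * (M - h j) = 0"
      using z by (subst (asm) sum_nonneg_eq_0_iff) (auto intro!: mult_nonneg_nonneg P_nn simp: hM)
    hence "P i (min (i + KP) N) * (M - h (min (i + KP) N)) = 0" by auto
    thus ?thesis using P_pos[OF ii] by simp
  qed
  have all: "h (min (i0 + n * KP) N) = M" for n
  proof (induction n)
    case 0 then show ?case using i0 by simp
  next
    case (Suc n)
    show ?case
    proof (cases "i0 + n * KP < N")
      case True
      have "h (min (min (i0 + n * KP) N + KP) N) = M" by (rule step) (use Suc in auto)
      moreover have "min (i0 + n * KP) N + KP = i0 + Suc n * KP" using True by simp
      ultimately show ?thesis by simp
    next
      case False
      then show ?thesis using Suc by simp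
    qed
  qed
  have "N * 1 \<le> N * KP" using KP_props(1) by (intro mult_le_mono2)
  hence "N \<le> i0 + N * KP" by linarith
  hence "min (i0 + N * KP) N = N" by (simp add: min_def)
  hence "h N = M" using all[of N] by simp
  thus False using hN Mpos by simp
qed

lemma harm_zero_real:
  fixes h :: "nat \<Rightarrow> real"
  assumes "h 0 = 0" "h N = 0"
    and harm: "\<forall>i. 0 < i \<and> i < N \<longrightarrow> h i = (\<Sum>j\<le>N. P i j * h j)"
  shows "\<forall>i\<le>N. h i = 0"
proof -
  have a: "\<forall>i\<le>N. h i \<le> 0" using harm_max assms by simp
  have "\<forall>i. 0 < i \<and> i < N \<longrightarrow> - h i = (\<Sum>j\<le>N. P i j * - h j)"
    using harm by (simp add: sum_negf)
  hence "\<forall>i\<le>N. - h i \<le> 0" using harm_max[of "\<lambda>i. - h i"] assms by simp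
  with a show ?thesis by force
qed

lemma harm_zero:
  fixes h :: "nat \<Rightarrow> complex"
  assumes "h 0 = 0" "h N = 0"
    and harm: "\<forall>i. 0 < i \<and> i < N \<longrightarrow> h i = (\<Sum>j\<le>N. P i j *\<^sub>R h j)"
  shows "\<forall>i\<le>N. h i = 0"
proof -
  have "\<forall>i\<le>N. Re (h i) = 0"
    by (rule harm_zero_real) (use assms in \<open>auto simp: Re_sum\<close>)
  moreover have "\<forall>i\<le>N. Im (h i) = 0"
    by (rule harm_zero_real) (use assms in \<open>auto simp: Im_sum\<close>)
  ultimately show ?thesis by (simp add: complex_eq_iff)
qed

abbreviation "hit \<equiv> hit_within P N N"

lemma hit_bounds: "\<forall>i\<le>N. 0 \<le> hit n i \<and> hit n i \<le> 1"
proof (induction n)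
  case 0 then show ?case by simp
next
  case (Suc n)
  show ?case
  proof (intro allI impI)
    fix i assume iN: "i \<le> N"
    show "0 \<le> hit (Suc n) i \<and> hit (Suc n) i \<le> 1"
    proof (cases "i = N")
      case False
      have "0 \<le> (\<Sum>j\<le>N. P i j * hit n j)" using Suc P_nn by (auto intro!: sum_nonneg)
      moreover have "(\<Sum>j\<le>N. P i j * hit n j) \<le> (\<Sum>j\<le>N. P i j * 1)"
        using Suc P_nn by (auto intro!: sum_mono mult_left_le)
      ultimately show ?thesis using False row_sum[OF iN] by simp
    qed simp
  qed
qed

lemma hit_mono: "\<forall>i\<le>N. hit n i \<le> hit (Suc n) i"
proof (induction n)
  case 0 then show ?case using hit_bounds[of 1] by auto
next
  case (Suc n)
  show ?case
  proof (intro allI impI)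
    fix i assume iN: "i \<le> N"
    show "hit (Suc n) i \<le> hit (Suc (Suc n)) i"
    proof (cases "i = N")
      case False
      have "(\<Sum>j\<le>N. P i j * hit n j) \<le> (\<Sum>j\<le>N. P i j * hit (Suc n) j)"
        using Suc P_nn by (auto intro!: sum_mono mult_left_mono)
      thus ?thesis using False by simp
    qed simp
  qed
qed

abbreviation "u \<equiv> absorb_prob k p q N"

lemma hit_lim: "i \<le> N \<Longrightarrow> (\<lambda>m. hit m i) \<longlonglongrightarrow> u i"
proof -
  assume iN: "i \<le> N"
  have inc: "incseq (\<lambda>m. hit m i)" using hit_mono iN by (intro incseq_SucI) auto
  have bd: "\<forall>m. hit m i \<le> 1" using hit_bounds iN by blast
  obtain L where "(\<lambda>m. hit m i) \<longlonglongrightarrow> L" using incseq_convergent[OF inc bd] by metis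
  hence "convergent (\<lambda>m. hit m i)" by (auto simp: convergent_def)
  thus ?thesis unfolding absorb_prob_def by (simp add: convergent_LIMSEQ_iff)
qed

lemma u_harm: "\<forall>i. 0 < i \<and> i < N \<longrightarrow> u i = (\<Sum>j\<le>N. P i j * u j)"
proof (intro allI impI)
  fix i assume i: "0 < i \<and> i < N"
  have "(\<lambda>m. hit (Suc m) i) \<longlonglongrightarrow> u i" using LIMSEQ_Suc[OF hit_lim[of i]] i by simp
  moreover have "(\<lambda>m. hit (Suc m) i) = (\<lambda>m. \<Sum>j\<le>N. P i j * hit m j)" using i by auto
  moreover have "(\<lambda>m. \<Sum>j\<le>N. P i j * hit m j) \<longlonglongrightarrow> (\<Sum>j\<le>N. P i j * u j)"
    by (intro tendsto_sum tendsto_mult_left hit_lim) auto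
  ultimately show "u i = (\<Sum>j\<le>N. P i j * u j)" using LIMSEQ_unique by simp
qed

lemma u_0: "u 0 = 0"
proof -
  have "hit m 0 = 0" for m
  proof (induction m)
    case 0 then show ?case using N2 by simp
  next
    case (Suc m)
    have "hit (Suc m) 0 = (\<Sum>j\<le>N. P 0 j * hit m j)" using N2 by simp
    also have "\<dots> = (\<Sum>j\<le>N. if j = 0 then hit m j else 0)"
      by (intro sum.cong refl) (auto simp: leap_trans_def)
    also have "\<dots> = 0" using Suc by simp
    finally show ?case .
  qed
  thus ?thesis using LIMSEQ_unique[OF hit_lim[of 0]] by simp
qed

lemma u_N: "u N = 1"
proof -
  have "hit m N = 1" for m by (cases m) auto
  hence "(\<lambda>m. hit m N) \<longlonglongrightarrow> 1" by simp
  thus ?thesis using LIMSEQ_unique[OF hit_lim[of N]] by simp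
qed

end



lemma swap1: "(\<Sum>j\<in>{1..n}. \<Sum>t\<in>{1..j}. f j t) = (\<Sum>t\<in>{1..n}. \<Sum>j\<in>{t..n}. f j t)"
  for f :: "nat \<Rightarrow> nat \<Rightarrow> 'a::comm_monoid_add"
proof (induction n)
  case (Suc n)
  have "(\<Sum>t\<in>{1..Suc n}. \<Sum>j\<in>{t..Suc n}. f j t) =
      (\<Sum>t\<in>{1..n}. \<Sum>j\<in>{t..Suc n}. f j t) + f (Suc n) (Suc n)" by simp
  also have "(\<Sum>t\<in>{1..n}. \<Sum>j\<in>{t..Suc n}. f j t) = (\<Sum>t\<in>{1..n}. (\<Sum>j\<in>{t..n}. f j t) + f (Suc n) t)"
    by (intro sum.cong refl) simp
  finally show ?case using Suc by (simp add: sum.distrib add.assoc)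
qed simp

lemma swap2: "(\<Sum>j\<in>{1..n}. \<Sum>t<j. f j t) = (\<Sum>t<n. \<Sum>j\<in>{Suc t..n}. f j t)"
  for f :: "nat \<Rightarrow> nat \<Rightarrow> 'a::comm_monoid_add"
proof (induction n)
  case (Suc n)
  have "(\<Sum>t<Suc n. \<Sum>j\<in>{Suc t..Suc n}. f j t) =
      (\<Sum>t<n. \<Sum>j\<in>{Suc t..Suc n}. f j t) + f (Suc n) n" by simp
  also have "(\<Sum>t<n. \<Sum>j\<in>{Suc t..Suc n}. f j t) = (\<Sum>t<n. (\<Sum>j\<in>{Suc t..n}. f j t) + f (Suc n) t)"
    by (intro sum.cong refl) simp
  finally show ?case using Suc by (simp add: sum.distrib add.assoc)
qed simp

lemma charsum:
  fixes w :: "int \<Rightarrow> complex" and p q :: "nat \<Rightarrow> real"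
  assumes "k \<ge> 1"
  shows "(\<Sum>j<2*k. of_real (char_coeff k p q j) * w (x - int k + 1 + int j)) =
    (\<Sum>j=1..k. of_real (p j) * (\<Sum>t=1..j. w (x + int t))) - (\<Sum>j=1..k. of_real (q j) * (\<Sum>t<j. w (x - int t)))"
proof -
  let ?g = "\<lambda>j. of_real (char_coeff k p q j) * w (x - int k + 1 + int j)"
  have split: "{..<2*k} = {..<k} \<union> {k..<2*k}" by auto
  have S: "(\<Sum>j<2*k. ?g j) = (\<Sum>j<k. ?g j) + (\<Sum>j\<in>{k..<2*k}. ?g j)"
    unfolding split by (rule sum.union_disjoint) auto
  have A: "(\<Sum>j<k. ?g j) = - (\<Sum>j=1..k. of_real (q j) * (\<Sum>t<j. w (x - int t)))"
  proof -
    have "(\<Sum>j<k. ?g j) = (\<Sum>t<k. ?g (k - Suc t))" by (rule sum.nat_diff_reindex[symmetric])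
    also have "\<dots> = (\<Sum>t<k. - (\<Sum>j\<in>{Suc t..k}. of_real (q j) * w (x - int t)))"
    proof (intro sum.cong refl)
      fix t assume t: "t \<in> {..<k}"
      have c: "char_coeff k p q (k - Suc t) = - (\<Sum>l\<in>{Suc t..k}. q l)"
        unfolding char_coeff_def using t by (auto intro!: sum.cong)
      have e: "x - int k + 1 + int (k - Suc t) = x - int t" using t by auto
      show "?g (k - Suc t) = - (\<Sum>j\<in>{Suc t..k}. of_real (q j) * w (x - int t))"
        unfolding c e by (simp add: sum_distrib_right)
    qed
    also have "\<dots> = - (\<Sum>t<k. \<Sum>j\<in>{Suc t..k}. of_real (q j) * w (x - int t))"
      by (simp add: sum_negf)
    also have "(\<Sum>t<k. \<Sum>j\<in>{Suc t..k}. of_real (q j) * w (x - int t)) =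
       (\<Sum>j=1..k. \<Sum>t<j. of_real (q j) * w (x - int t))" by (rule swap2[symmetric])
    finally show ?thesis by (simp add: sum_distrib_left)
  qed
  have B: "(\<Sum>j\<in>{k..<2*k}. ?g j) = (\<Sum>j=1..k. of_real (p j) * (\<Sum>t=1..j. w (x + int t)))"
  proof -
    have "(\<Sum>j\<in>{k..<2*k}. ?g j) = (\<Sum>t\<in>{1..k}. ?g (k - 1 + t))"
      by (rule sum.reindex_bij_witness[of _ "\<lambda>t. k - 1 + t" "\<lambda>j. j + 1 - k"]) (use assms in auto)
    also have "\<dots> = (\<Sum>t\<in>{1..k}. \<Sum>j\<in>{t..k}. of_real (p j) * w (x + int t))"
    proof (intro sum.cong refl)
      fix t assume t: "t \<in> {1..k}"
      have c: "char_coeff k p q (k - 1 + t) = (\<Sum>l\<in>{t..k}. p l)"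
        unfolding char_coeff_def using t by (auto intro!: sum.cong)
      have e: "x - int k + 1 + int (k - 1 + t) = x + int t" using t by auto
      show "?g (k - 1 + t) = (\<Sum>j\<in>{t..k}. of_real (p j) * w (x + int t))"
        unfolding c e by (simp add: sum_distrib_right)
    qed
    also have "\<dots> = (\<Sum>j=1..k. \<Sum>t\<in>{1..j}. of_real (p j) * w (x + int t))" by (rule swap1[symmetric])
    finally show ?thesis by (simp add: sum_distrib_left)
  qed
  show ?thesis using S A B by simp
qed

lemma int_interval_split:
  fixes w :: "int \<Rightarrow> 'a::comm_monoid_add"
  assumes "a \<le> x + 1"
  shows "(\<Sum>e\<in>{a..x + int j}. w e) = (\<Sum>e\<in>{a..x}. w e) + (\<Sum>t=1..j. w (x + int t))"
proof (induction j)
  case 0 then show ?case by simp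
next
  case (Suc j)
  have "{a..x + int (Suc j)} = insert (x + int (Suc j)) {a..x + int j}" using assms by auto
  hence "(\<Sum>e\<in>{a..x + int (Suc j)}. w e) = w (x + int (Suc j)) + (\<Sum>e\<in>{a..x + int j}. w e)" by simp
  then show ?case using Suc by (simp add: add_ac)
qed

lemma int_interval_split2:
  fixes w :: "int \<Rightarrow> 'a::ab_group_add"
  assumes "a \<le> x - int j + 1"
  shows "(\<Sum>e\<in>{a..x - int j}. w e) = (\<Sum>e\<in>{a..x}. w e) - (\<Sum>t<j. w (x - int t))"
proof -
  have "(\<Sum>e\<in>{a..(x - int j) + int j}. w e) = (\<Sum>e\<in>{a..x - int j}. w e) + (\<Sum>t=1..j. w (x - int j + int t))"
    by (rule int_interval_split) (use assms in simp)
  moreover have "(\<Sum>t=1..j. w (x - int j + int t)) = (\<Sum>t<j. w (x - int t))"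
    by (rule sum.reindex_bij_witness[of _ "\<lambda>t. j - t" "\<lambda>t. j - t"]) (auto simp: of_nat_diff algebra_simps)
  ultimately show ?thesis by (simp add: algebra_simps)
qed

context leap begin

abbreviation "cc \<equiv> char_coeff k p q"

lemma rec_harm:
  fixes w :: "int \<Rightarrow> complex"
  assumes rec: "\<forall>i. 0 < i \<and> i < N \<longrightarrow> (\<Sum>j<2*k. of_real (cc j) * w (int i - int k + 1 + int j)) = 0"
    and bl: "\<forall>e. 2 - int KQ \<le> e \<and> e \<le> 0 \<longrightarrow> w e = 0"
    and br: "\<forall>e. int N + 1 \<le> e \<and> e \<le> int N + int KP - 1 \<longrightarrow> w e = 0"
  shows "\<forall>i. 0 < i \<and> i < N \<longrightarrow> (\<Sum>e\<in>{1..int i}. w e) = (\<Sum>j\<le>N. P i j *\<^sub>R (\<Sum>e\<in>{1..int j}. w e))"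
proof (intro allI impI)
  fix i assume i: "0 < i \<and> i < N"
  define h where "h j = (\<Sum>e\<in>{1..int j}. w e)" for j
  define V where "V x = (\<Sum>e\<in>{2 - int KQ..x}. w e)" for x
  have Vh: "V x = h (clip x)" if x: "1 - int KQ \<le> x" "x \<le> int N + int KP - 1" for x
  proof -
    have z: "(\<Sum>e\<in>{2 - int KQ..0}. w e) = 0" using bl by (intro sum.neutral) auto
    have split0: "V y = (\<Sum>e\<in>{1..y}. w e)" if "y \<ge> 0" for y
    proof -
      have "{2 - int KQ..y} = {2 - int KQ..0} \<union> {1..y}" using that KQ_props(1) by auto
      hence "V y = (\<Sum>e\<in>{2 - int KQ..0}. w e) + (\<Sum>e\<in>{1..y}. w e)"
        unfolding V_def by (simp add: sum.union_disjoint)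
      thus ?thesis using z by simp
    qed
    consider "x \<le> 0" | "0 < x \<and> x \<le> int N" | "int N < x" by linarith
    then show ?thesis
    proof cases
      case 1
      have "V x = 0" unfolding V_def using bl 1 by (intro sum.neutral) auto
      moreover have "clip x = 0" using 1 unfolding clip_def by simp
      ultimately show ?thesis unfolding h_def by simp
    next
      case 2
      hence "clip x = nat x" unfolding clip_def by simp
      then show ?thesis using split0[of x] 2 unfolding h_def by simp
    next
      case 3
      have "{1..x} = {1..int N} \<union> {int N + 1..x}" using 3 by auto
      hence "(\<Sum>e\<in>{1..x}. w e) = (\<Sum>e\<in>{1..int N}. w e) + (\<Sum>e\<in>{int N + 1..x}. w e)"
        by (simp add: sum.union_disjoint)
      moreover have "(\<Sum>e\<in>{int N + 1..x}. w e) = 0" using br x by (intro sum.neutral) auto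
      moreover have "clip x = N" using 3 unfolding clip_def by simp
      ultimately show ?thesis using split0[of x] 3 unfolding h_def by simp
    qed
  qed
  have ii: "0 < i" "i < N" using i by auto
  have "(\<Sum>j\<le>N. P i j *\<^sub>R h j) = (\<Sum>d\<in>{- int k..int k}. xi d *\<^sub>R h (clip (int i + d)))"
    by (rule P_expand[OF ii])
  also have "\<dots> = (\<Sum>d\<in>{- int k..int k}. xi d *\<^sub>R V (int i + d))"
  proof (intro sum.cong refl)
    fix d assume "d \<in> {- int k..int k}"
    show "xi d *\<^sub>R h (clip (int i + d)) = xi d *\<^sub>R V (int i + d)"
    proof (cases "xi d = 0")
      case False
      hence "\<not> (d < - int KQ \<or> d > int KP \<or> d = 0)" using xi_out by blast
      hence "1 - int KQ \<le> int i + d" "int i + d \<le> int N + int KP - 1" using ii by auto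
      then show ?thesis using Vh by simp
    qed simp
  qed
  also have "\<dots> = (\<Sum>j=1..k. p j *\<^sub>R V (int i + int j)) + (\<Sum>j=1..k. q j *\<^sub>R V (int i + - int j))"
    by (rule xi_expand)
  also have "(\<Sum>j=1..k. p j *\<^sub>R V (int i + int j)) =
     (\<Sum>j=1..k. p j *\<^sub>R V (int i)) + (\<Sum>j=1..k. of_real (p j) * (\<Sum>t=1..j. w (int i + int t)))"
    unfolding sum.distrib[symmetric]
  proof (intro sum.cong refl)
    fix j assume "j \<in> {1..k}"
    have "V (int i + int j) = V (int i) + (\<Sum>t=1..j. w (int i + int t))"
      unfolding V_def by (rule int_interval_split) (use KQ_props(1) in simp)
    then show "p j *\<^sub>R V (int i + int j) = p j *\<^sub>R V (int i) + of_real (p j) * (\<Sum>t=1..j. w (int i + int t))"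
      by (simp add: scaleR_conv_of_real algebra_simps)
  qed
  also have "(\<Sum>j=1..k. q j *\<^sub>R V (int i + - int j)) =
     (\<Sum>j=1..k. q j *\<^sub>R V (int i)) - (\<Sum>j=1..k. of_real (q j) * (\<Sum>t<j. w (int i - int t)))"
    unfolding sum_subtractf[symmetric]
  proof (intro sum.cong refl)
    fix j assume j: "j \<in> {1..k}"
    show "q j *\<^sub>R V (int i + - int j) = q j *\<^sub>R V (int i) - of_real (q j) * (\<Sum>t<j. w (int i - int t))"
    proof (cases "j \<le> KQ")
      case True
      have "V (int i - int j) = V (int i) - (\<Sum>t<j. w (int i - int t))"
        unfolding V_def by (rule int_interval_split2) (use True ii in simp)
      hence e2: "V (int i + - int j) = V (int i) - (\<Sum>t<j. w (int i - int t))" by simp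
      show ?thesis by (simp only: e2 scaleR_conv_of_real right_diff_distrib)
    next
      case False
      hence "q j = 0" using KQ_props(4) j by auto
      then show ?thesis by simp
    qed
  qed
  finally have eq: "(\<Sum>j\<le>N. P i j *\<^sub>R h j) =
   (\<Sum>j = 1..k. p j *\<^sub>R V (int i)) +
   (\<Sum>j = 1..k. complex_of_real (p j) * (\<Sum>t = 1..j. w (int i + int t))) +
   ((\<Sum>j = 1..k. q j *\<^sub>R V (int i)) -
    (\<Sum>j = 1..k. complex_of_real (q j) * (\<Sum>t<j. w (int i - int t))))" .
  have a: "(\<Sum>j=1..k. p j *\<^sub>R V (int i)) + (\<Sum>j=1..k. q j *\<^sub>R V (int i)) = V (int i)"
    using tot by (simp add: scaleR_sum_left[symmetric] scaleR_add_left[symmetric] sum.distrib[symmetric])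
  have b: "(\<Sum>j=1..k. of_real (p j) * (\<Sum>t=1..j. w (int i + int t))) -
      (\<Sum>j=1..k. of_real (q j) * (\<Sum>t<j. w (int i - int t))) = 0"
    using charsum[OF k1, where w=w and p=p and q=q and x="int i"] rec i by simp
  have "(\<Sum>j\<le>N. P i j *\<^sub>R h j) = V (int i)" 
    unfolding eq using a b by (simp add: algebra_simps)
  moreover have "V (int i) = h i" using Vh[of "int i"] ii KP_props(1) unfolding clip_def by simp
  ultimately show "(\<Sum>e\<in>{1..int i}. w e) = (\<Sum>j\<le>N. P i j *\<^sub>R (\<Sum>e\<in>{1..int j}. w e))"
    unfolding h_def by simp
qed

end



context leap begin

abbreviation "chi \<equiv> char_poly k p q"
abbreviation "R \<equiv> KP + KQ - 1"

lemma coeff_chi: "coeff chi j = (if j < 2 * k then of_real (cc j) else 0)"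
  unfolding char_poly_def by (auto simp: nth_default_def)

lemma cc_low: "j < k - KQ \<Longrightarrow> cc j = 0"
  unfolding char_coeff_def using KQ_props by (auto intro!: sum.neutral)

lemma cc_j0: "cc (k - KQ) = - q KQ"
proof -
  have "cc (k - KQ) = - (\<Sum>l\<in>{KQ..k}. q l)" unfolding char_coeff_def using KQ_props by auto
  also have "(\<Sum>l\<in>{KQ..k}. q l) = q KQ + (\<Sum>l\<in>{Suc KQ..k}. q l)"
    using KQ_props(2) by (simp add: sum.atLeast_Suc_atMost)
  also have "(\<Sum>l\<in>{Suc KQ..k}. q l) = 0" using KQ_props(4) by (intro sum.neutral) auto
  finally show ?thesis by simp
qed

lemma cc_high: "k + KP - 1 < j \<Longrightarrow> cc j = 0"
proof -
  assume j: "k + KP - 1 < j"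
  hence "\<not> j \<le> k - 1" using KP_props(1) by auto
  hence "cc j = (\<Sum>l\<in>{j - k + 1..k}. p l)" unfolding char_coeff_def by auto
  also have "\<dots> = 0" using KP_props(4) j by (intro sum.neutral) auto
  finally show ?thesis .
qed

lemma cc_j1: "cc (k + KP - 1) = p KP"
proof -
  have "\<not> k + KP - 1 \<le> k - 1" using KP_props(1) k1 by auto
  hence "cc (k + KP - 1) = (\<Sum>l\<in>{KP..k}. p l)" unfolding char_coeff_def using KP_props(1) by auto
  also have "(\<Sum>l\<in>{KP..k}. p l) = p KP + (\<Sum>l\<in>{Suc KP..k}. p l)"
    using KP_props(2) by (simp add: sum.atLeast_Suc_atMost)
  also have "(\<Sum>l\<in>{Suc KP..k}. p l) = 0" using KP_props(4) by (intro sum.neutral) auto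
  finally show ?thesis by simp
qed

lemma chi_nz: "chi \<noteq> 0"
proof
  assume "chi = 0"
  hence "coeff chi (k + KP - 1) = 0" by simp
  moreover have "k + KP - 1 < 2 * k" using KP_props k1 by simp
  ultimately show False using coeff_chi cc_j1 KP_props(3) by simp
qed

lemma deg_chi: "degree chi < 2 * k"
  using coeff_zero_above[OF chi_nz, of "2*k"] coeff_chi by simp

definition "j0 = k - KQ"
definition gpoly :: "complex poly" where
  "gpoly = Poly (map (\<lambda>j. of_real (cc (j + j0))) [0..<R + 1])"

lemma coeff_g: "coeff gpoly n = (if n \<le> R then of_real (cc (n + j0)) else 0)"
  unfolding gpoly_def by (auto simp: nth_default_def simp del: upt_Suc)

lemma chi_factor: "chi = monom 1 j0 * gpoly"
proof (rule poly_eqI)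
  fix n
  show "coeff chi n = coeff (monom 1 j0 * gpoly) n"
  proof (cases "n < j0")
    case True
    then show ?thesis unfolding coeff_monom_mult coeff_chi using cc_low j0_def by auto
  next
    case False
    have h: "n - j0 + j0 = n" using False by simp
    show ?thesis
    proof (cases "n - j0 \<le> R")
      case True
      have "n < 2 * k" using True False KP_props KQ_props unfolding j0_def by linarith
      then show ?thesis unfolding coeff_monom_mult coeff_chi coeff_g using False True h by simp
    next
      case nR: False
      have "k + KP - 1 < n" using nR False KP_props KQ_props unfolding j0_def by linarith
      then show ?thesis unfolding coeff_monom_mult coeff_chi coeff_g using False nR cc_high by simp
    qed
  qed
qed

lemma g_nz: "gpoly \<noteq> 0" using chi_factor chi_nz by auto

lemma deg_g: "degree gpoly = R"
proof (rule antisym)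
  show "degree gpoly \<le> R" by (rule degree_le) (auto simp: coeff_g)
  have "R + j0 = k + KP - 1" unfolding j0_def using KP_props KQ_props by simp
  hence "coeff gpoly R \<noteq> 0" unfolding coeff_g using cc_j1 KP_props(3) by simp
  thus "R \<le> degree gpoly" by (rule le_degree)
qed

lemma g_0: "poly gpoly 0 \<noteq> 0"
proof -
  have "poly gpoly 0 = coeff gpoly 0" by (simp add: poly_0_coeff_0)
  also have "\<dots> = of_real (- q KQ)" unfolding coeff_g using cc_j0 unfolding j0_def by simp
  finally show ?thesis using KQ_props(3) by simp
qed

lemma roots_chi: "z \<noteq> 0 \<Longrightarrow> poly chi z = 0 \<longleftrightarrow> poly gpoly z = 0"
  by (subst chi_factor) (simp add: poly_monom)

lemma order_chi: "z \<noteq> 0 \<Longrightarrow> order z chi = order z gpoly"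
proof -
  assume z: "z \<noteq> 0"
  have "order z chi = order z (monom 1 j0) + order z gpoly"
    using chi_nz unfolding chi_factor by (rule order_mult)
  moreover have "order z (monom (1::complex) j0) = 0" using z by (intro order_0I) (simp add: poly_monom)
  ultimately show ?thesis by simp
qed

lemma sum_orders:
  assumes "set zs = {z. z \<noteq> 0 \<and> poly chi z = 0}"
  shows "(\<Sum>z\<in>set zs. order z chi) = R"
proof -
  have s: "set zs = {z. poly gpoly z = 0}"
  proof (intro equalityI subsetI)
    fix z assume "z \<in> set zs"
    hence "z \<noteq> 0" "poly chi z = 0" using assms by auto
    thus "z \<in> {z. poly gpoly z = 0}" using roots_chi by blast
  next
    fix z assume "z \<in> {z. poly gpoly z = 0}"
    hence g: "poly gpoly z = 0" by simp
    hence z: "z \<noteq> 0" using g_0 by auto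
    hence "poly chi z = 0" using roots_chi g by blast
    thus "z \<in> set zs" using assms z by blast
  qed
  have s1: "set_mset (proots gpoly) = set zs" unfolding s by (rule set_count_proots[OF g_nz])
  have "(\<Sum>z\<in>set zs. order z chi) = (\<Sum>z\<in>set zs. order z gpoly)"
  proof (intro sum.cong refl)
    fix z assume "z \<in> set zs"
    hence "z \<noteq> 0" using assms by blast
    thus "order z chi = order z gpoly" by (rule order_chi)
  qed
  also have "\<dots> = (\<Sum>z\<in>set_mset (proots gpoly). count (proots gpoly) z)"
    unfolding s1 by (intro sum.cong refl) (simp add: count_proots[OF g_nz])
  also have "\<dots> = size (proots gpoly)" by (rule size_multiset_overloaded_eq[symmetric])
  also have "\<dots> = R" using size_proots_complex[of gpoly] deg_g by simp
  finally show ?thesis .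
qed

end



definition Zent :: "complex \<times> nat \<Rightarrow> int \<Rightarrow> complex" where
  "Zent x e = of_int e ^ (snd x - 1) * fst x powi e"

locale leapz = leap +
  fixes zs :: "complex list"
  assumes zs_dist: "distinct zs" and zs_set: "set zs = {z. z \<noteq> 0 \<and> poly (char_poly k p q) z = 0}"
begin

abbreviation "ZC \<equiv> Z_cols chi zs"
abbreviation "nc \<equiv> length ZC"
abbreviation "Zm \<equiv> Z_mat KQ R N chi zs"
abbreviation "Am i \<equiv> accordion KQ KP N i"

definition wfun :: "complex vec \<Rightarrow> int \<Rightarrow> complex" where
  "wfun \<beta> e = (\<Sum>c<nc. \<beta> $ c * Zent (ZC ! c) e)"

lemma zs_nz: "z \<in> set zs \<Longrightarrow> z \<noteq> 0" using zs_set by auto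

lemma zs_ord: "z \<in> set zs \<Longrightarrow> order z chi \<ge> 1"
proof -
  assume "z \<in> set zs"
  hence "poly chi z = 0" using zs_set by auto
  hence "order z chi \<noteq> 0" using order_root chi_nz by blast
  thus ?thesis by simp
qed

lemma set_cols: "set ZC = {(z, l). z \<in> set zs \<and> 1 \<le> l \<and> l \<le> order z chi}"
  unfolding Z_cols_def by (auto simp del: upt_Suc)

lemma set_cols_Sigma: "set ZC = Sigma (set zs) (\<lambda>z. {1..order z chi})"
  unfolding set_cols by auto

lemma dist_cols: "distinct ZC"
  unfolding Z_cols_def
proof (rule distinct_concat)
  show "distinct (map (\<lambda>z. map (\<lambda>l. (z, l)) [1..<order z chi + 1]) zs)"
  proof (subst distinct_map, intro conjI zs_dist inj_onI)
    fix x y assume x: "x \<in> set zs" and y: "y \<in> set zs"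
      and e: "map (\<lambda>l. (x, l)) [1..<order x chi + 1] = map (\<lambda>l. (y, l)) [1..<order y chi + 1]"
    have "(x, 1) \<in> set (map (\<lambda>l. (x, l)) [1..<order x chi + 1])" using zs_ord[OF x] by auto
    hence "(x, 1) \<in> set (map (\<lambda>l. (y, l)) [1..<order y chi + 1])" using e by (simp only:)
    thus "x = y" by auto
  qed
next
  fix ys assume "ys \<in> set (map (\<lambda>z. map (\<lambda>l. (z, l)) [1..<order z chi + 1]) zs)"
  thus "distinct ys" by (auto simp: distinct_map inj_on_def)
next
  fix ys ys' assume "ys \<in> set (map (\<lambda>z. map (\<lambda>l. (z, l)) [1..<order z chi + 1]) zs)"
    "ys' \<in> set (map (\<lambda>z. map (\<lambda>l. (z, l)) [1..<order z chi + 1]) zs)" "ys \<noteq> ys'"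
  thus "set ys \<inter> set ys' = {}" by auto
qed

lemma nc_R: "nc = R"
proof -
  have "nc = sum_list (map (\<lambda>z. order z chi) zs)"
    unfolding Z_cols_def length_concat by (simp add: comp_def del: upt_Suc)
  also have "\<dots> = (\<Sum>z\<in>set zs. order z chi)" by (rule sum_list_distinct_conv_sum_set[OF zs_dist])
  also have "\<dots> = R" by (rule sum_orders[OF zs_set])
  finally show ?thesis .
qed

lemma Zm_carrier: "Zm \<in> carrier_mat (N + R - 1) nc"
  unfolding Z_mat_def by simp

lemma Zm_index: "i0 < N + R - 1 \<Longrightarrow> c < nc \<Longrightarrow> Zm $$ (i0, c) = Zent (ZC ! c) (int i0 + 2 - int KQ)"
  unfolding Z_mat_def Zent_def by (auto simp: Let_def algebra_simps split: prod.splits)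

lemma Zm_vec: assumes "\<beta> \<in> carrier_vec nc" "i0 < N + R - 1"
  shows "(Zm *\<^sub>v \<beta>) $ i0 = wfun \<beta> (int i0 + 2 - int KQ)"
proof -
  have "(Zm *\<^sub>v \<beta>) $ i0 = row Zm i0 \<bullet> \<beta>" using assms Zm_carrier by auto
  also have "\<dots> = (\<Sum>c<nc. Zm $$ (i0, c) * \<beta> $ c)"
    unfolding scalar_prod_def using assms Zm_carrier by (auto intro!: sum.cong simp: atLeast0LessThan)
  also have "\<dots> = wfun \<beta> (int i0 + 2 - int KQ)"
    unfolding wfun_def
  proof (intro sum.cong refl)
    fix c assume "c \<in> {..<nc}"
    thus "Zm $$ (i0, c) * \<beta> $ c = \<beta> $ c * Zent (ZC ! c) (int i0 + 2 - int KQ)"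
      using Zm_index[OF assms(2)] by simp
  qed
  finally show ?thesis .
qed

lemma wfun_rec: "(\<Sum>j<2*k. of_real (cc j) * wfun \<beta> (x - int k + 1 + int j)) = 0"
proof -
  have "(\<Sum>j<2*k. of_real (cc j) * wfun \<beta> (x - int k + 1 + int j)) =
     (\<Sum>c<nc. \<beta> $ c * (\<Sum>j<2*k. coeff chi j * Zent (ZC ! c) (x - int k + 1 + int j)))"
    unfolding wfun_def sum_distrib_left
    by (subst sum.swap) (auto intro!: sum.cong simp: coeff_chi mult_ac)
  also have "\<dots> = 0"
  proof (intro sum.neutral ballI)
    fix c assume c: "c \<in> {..<nc}"
    obtain z l where zl: "ZC ! c = (z, l)" by fastforce
    have "(z, l) \<in> set ZC" using c zl[symmetric] by auto
    hence z: "z \<in> set zs" and l: "1 \<le> l" "l \<le> order z chi" unfolding set_cols by auto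
    have "(\<Sum>j<2*k. coeff chi j * Zent (z, l) ((x - int k + 1) + int j)) = 0"
      unfolding Zent_def using root_moment[OF chi_nz deg_chi zs_nz[OF z] l, where e = "x - int k + 1"]
      by (simp add: mult_ac)
    thus "\<beta> $ c * (\<Sum>j<2*k. coeff chi j * Zent (ZC ! c) (x - int k + 1 + int j)) = 0"
      unfolding zl by simp
  qed
  finally show ?thesis .
qed

definition idx :: "complex \<times> nat \<Rightarrow> nat" where
  "idx x = (THE c. c < nc \<and> ZC ! c = x)"

lemma idx_nth: "c < nc \<Longrightarrow> idx (ZC ! c) = c"
  unfolding idx_def using dist_cols by (intro the_equality) (auto simp: nth_eq_iff_index_eq)

lemma idx_in: assumes "x \<in> set ZC" shows "idx x < nc" "ZC ! idx x = x"
proof -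
  obtain c where c: "c < nc" "ZC ! c = x" using assms by (auto simp: in_set_conv_nth)
  have "idx x = c" using idx_nth[OF c(1)] c(2) by simp
  thus "idx x < nc" "ZC ! idx x = x" using c by auto
qed

lemma wfun_poly:
  "wfun \<beta> e = (\<Sum>z\<in>set zs. poly (\<Sum>l\<in>{1..order z chi}. monom (\<beta> $ idx (z, l)) (l - 1)) (of_int e) * z powi e)"
proof -
  have "wfun \<beta> e = (\<Sum>x\<in>set ZC. \<beta> $ idx x * Zent x e)"
    unfolding wfun_def
    by (rule sum.reindex_bij_witness[of _ idx "\<lambda>c. ZC ! c"]) (auto simp: idx_nth idx_in)
  also have "\<dots> = (\<Sum>z\<in>set zs. \<Sum>l\<in>{1..order z chi}. \<beta> $ idx (z, l) * Zent (z, l) e)"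
    unfolding set_cols_Sigma by (subst sum.Sigma) auto
  also have "\<dots> = (\<Sum>z\<in>set zs. poly (\<Sum>l\<in>{1..order z chi}. monom (\<beta> $ idx (z, l)) (l - 1)) (of_int e) * z powi e)"
  proof (intro sum.cong refl)
    fix z assume "z \<in> set zs"
    show "(\<Sum>l\<in>{1..order z chi}. \<beta> $ idx (z, l) * Zent (z, l) e) =
      poly (\<Sum>l\<in>{1..order z chi}. monom (\<beta> $ idx (z, l)) (l - 1)) (of_int e) * z powi e"
      unfolding poly_sum poly_monom sum_distrib_right Zent_def by (intro sum.cong refl) (simp add: mult_ac)
  qed
  finally show ?thesis .
qed

lemma indep_cols:
  assumes b: "\<beta> \<in> carrier_vec nc" and z: "\<forall>i0 < N + R - 1. wfun \<beta> (int i0 + 2 - int KQ) = 0"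
  shows "\<beta> = 0\<^sub>v nc"
proof -
  define Pz where "Pz z = (\<Sum>l\<in>{1..order z chi}. monom (\<beta> $ idx (z, l)) (l - 1))" for z
  have coeffP: "coeff (Pz z) n = (if n < order z chi then \<beta> $ idx (z, n + 1) else 0)" for z n
  proof -
    have "coeff (Pz z) n = (\<Sum>l\<in>{1..order z chi}. if l = n + 1 then \<beta> $ idx (z, l) else 0)"
      unfolding Pz_def coeff_sum by (intro sum.cong refl) (auto simp: coeff_monom)
    also have "\<dots> = (if n < order z chi then \<beta> $ idx (z, n + 1) else 0)"
      by (subst sum.delta) auto
    finally show ?thesis .
  qed
  have "\<forall>z\<in>set zs. Pz z = 0"
  proof (rule indep_expo[where m = "\<lambda>z. order z chi" and L = "N + R - 1" and ee = "2 - int KQ"])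
    show "finite (set zs)" by simp
    show "0 \<notin> set zs" using zs_nz by blast
    show "\<forall>z\<in>set zs. \<forall>n\<ge>order z chi. coeff (Pz z) n = 0" by (simp add: coeffP)
    show "(\<Sum>z\<in>set zs. order z chi) \<le> N + R - 1" using sum_orders[OF zs_set] N2 by simp
    show "\<forall>t<N + R - 1. (\<Sum>z\<in>set zs. poly (Pz z) (of_int (2 - int KQ + int t)) * z powi (2 - int KQ + int t)) = 0"
    proof (intro allI impI)
      fix t assume t: "t < N + R - 1"
      have "wfun \<beta> (int t + 2 - int KQ) = 0" using z t by blast
      moreover have "int t + 2 - int KQ = 2 - int KQ + int t" by simp
      ultimately show "(\<Sum>z\<in>set zs. poly (Pz z) (of_int (2 - int KQ + int t)) * z powi (2 - int KQ + int t)) = 0"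
        unfolding Pz_def wfun_poly by simp
    qed
  qed
  show ?thesis
  proof (rule eq_vecI)
    show "dim_vec \<beta> = dim_vec (0\<^sub>v nc)" using b by simp
    fix c assume "c < dim_vec (0\<^sub>v nc)"
    hence c: "c < nc" by simp
    obtain z l where zl: "ZC ! c = (z, l)" by fastforce
    have "(z, l) \<in> set ZC" using c zl[symmetric] by auto
    hence zz: "z \<in> set zs" and l: "1 \<le> l" "l \<le> order z chi" unfolding set_cols by auto
    have "coeff (Pz z) (l - 1) = 0" using \<open>\<forall>z\<in>set zs. Pz z = 0\<close> zz by simp
    moreover have "l - 1 + 1 = l" "l - 1 < order z chi" using l by auto
    ultimately have "\<beta> $ idx (z, l) = 0" unfolding coeffP by simp
    hence "\<beta> $ c = 0" using idx_nth[OF c] zl by simp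
    thus "\<beta> $ c = 0\<^sub>v nc $ c" using c by simp
  qed
qed

end



context leapz begin

lemma Am_carrier: "Am i \<in> carrier_mat R (N + R - 1)"
  unfolding accordion_def by simp

lemma Am_index: "a0 < R \<Longrightarrow> m0 < N + R - 1 \<Longrightarrow> Am i $$ (a0, m0) =
   (if a0 + 1 < KQ then (if m0 = a0 then 1 else 0)
    else if a0 + 1 = KQ then (if KQ \<le> m0 + 1 \<and> m0 + 1 \<le> KQ + i - 1 then 1 else 0)
    else (if m0 + 1 = N + a0 then 1 else 0))"
  unfolding accordion_def by (simp add: Let_def)

lemma Am_vec:
  assumes y: "y \<in> carrier_vec (N + R - 1)" and a0: "a0 < R" and i: "i \<le> N"
  shows "(Am i *\<^sub>v y) $ a0 = (if a0 < KQ - 1 then y $ a0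
     else if a0 = KQ - 1 then (\<Sum>m0\<in>{KQ - 1..<KQ - 1 + i}. y $ m0) else y $ (N + a0 - 1))"
proof -
  let ?n = "N + R - 1"
  have dr: "dim_row (Am i) = R" using Am_carrier[of i] by blast
  have dc: "dim_col (Am i) = N + R - 1" using Am_carrier[of i] by blast
  have "(Am i *\<^sub>v y) $ a0 = row (Am i) a0 \<bullet> y" by (rule index_mult_mat_vec) (use a0 in \<open>simp add: dr\<close>)
  also have "\<dots> = (\<Sum>m0<?n. Am i $$ (a0, m0) * y $ m0)"
    unfolding scalar_prod_def using y a0 by (auto intro!: sum.cong simp: atLeast0LessThan dr dc)
  finally have e: "(Am i *\<^sub>v y) $ a0 = (\<Sum>m0<?n. Am i $$ (a0, m0) * y $ m0)" .
  show ?thesis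
  proof (cases "a0 < KQ - 1")
    case True
    have "(\<Sum>m0<?n. Am i $$ (a0, m0) * y $ m0) = (\<Sum>m0<?n. if m0 = a0 then y $ m0 else 0)"
      using True a0 by (intro sum.cong refl) (simp add: Am_index)
    also have "\<dots> = y $ a0" using True KP_props(1) by simp
    finally show ?thesis using e True by simp
  next
    case F1: False
    show ?thesis
    proof (cases "a0 = KQ - 1")
      case True
      have "(\<Sum>m0<?n. Am i $$ (a0, m0) * y $ m0) = (\<Sum>m0<?n. if m0 \<in> {KQ - 1..<KQ - 1 + i} then y $ m0 else 0)"
        using True a0 KQ_props(1) by (intro sum.cong refl) (auto simp: Am_index)
      also have "\<dots> = (\<Sum>m0\<in>{..<?n} \<inter> {KQ - 1..<KQ - 1 + i}. y $ m0)"
        by (rule sum.inter_restrict[symmetric]) simp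
      also have "{..<?n} \<inter> {KQ - 1..<KQ - 1 + i} = {KQ - 1..<KQ - 1 + i}"
        using i KP_props(1) KQ_props(1) by auto
      finally show ?thesis using e True by simp
    next
      case False
      have "(\<Sum>m0<?n. Am i $$ (a0, m0) * y $ m0) = (\<Sum>m0<?n. if m0 = N + a0 - 1 then y $ m0 else 0)"
        using False F1 a0 N2 by (intro sum.cong refl) (auto simp: Am_index)
      also have "\<dots> = y $ (N + a0 - 1)" using a0 N2 by simp
      finally show ?thesis using e False F1 by simp
    qed
  qed
qed

lemma AZ_vec:
  assumes b: "\<beta> \<in> carrier_vec nc" and a0: "a0 < R" and i: "i \<le> N"
  shows "((Am i * Zm) *\<^sub>v \<beta>) $ a0 = (if a0 < KQ - 1 then wfun \<beta> (int a0 + 2 - int KQ)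
     else if a0 = KQ - 1 then (\<Sum>e\<in>{1..int i}. wfun \<beta> e) else wfun \<beta> (int N + int a0 + 1 - int KQ))"
proof -
  have y: "Zm *\<^sub>v \<beta> \<in> carrier_vec (N + R - 1)" using Zm_carrier b by simp
  have "((Am i * Zm) *\<^sub>v \<beta>) $ a0 = (Am i *\<^sub>v (Zm *\<^sub>v \<beta>)) $ a0"
    using assoc_mult_mat_vec[OF Am_carrier[of i] Zm_carrier b] by simp
  also have "\<dots> = (if a0 < KQ - 1 then (Zm *\<^sub>v \<beta>) $ a0
     else if a0 = KQ - 1 then (\<Sum>m0\<in>{KQ - 1..<KQ - 1 + i}. (Zm *\<^sub>v \<beta>) $ m0) else (Zm *\<^sub>v \<beta>) $ (N + a0 - 1))"
    by (rule Am_vec[OF y a0 i])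
  also have "\<dots> = (if a0 < KQ - 1 then wfun \<beta> (int a0 + 2 - int KQ)
     else if a0 = KQ - 1 then (\<Sum>e\<in>{1..int i}. wfun \<beta> e) else wfun \<beta> (int N + int a0 + 1 - int KQ))"
  proof -
    have r1: "a0 < KQ - 1 \<Longrightarrow> (Zm *\<^sub>v \<beta>) $ a0 = wfun \<beta> (int a0 + 2 - int KQ)"
      using Zm_vec[OF b] a0 N2 by simp
    have r3: "(Zm *\<^sub>v \<beta>) $ (N + a0 - 1) = wfun \<beta> (int N + int a0 + 1 - int KQ)"
    proof -
      have "(Zm *\<^sub>v \<beta>) $ (N + a0 - 1) = wfun \<beta> (int (N + a0 - 1) + 2 - int KQ)"
        using Zm_vec[OF b] a0 N2 by simp
      moreover have "int (N + a0 - 1) + 2 - int KQ = int N + int a0 + 1 - int KQ" using N2 by simp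
      ultimately show ?thesis by (simp add: add_ac)
    qed
    have r2: "(\<Sum>m0\<in>{KQ - 1..<KQ - 1 + i}. (Zm *\<^sub>v \<beta>) $ m0) = (\<Sum>e\<in>{1..int i}. wfun \<beta> e)"
    proof -
      have "(\<Sum>m0\<in>{KQ - 1..<KQ - 1 + i}. (Zm *\<^sub>v \<beta>) $ m0) =
          (\<Sum>m0\<in>{KQ - 1..<KQ - 1 + i}. wfun \<beta> (int m0 + 2 - int KQ))"
      proof (intro sum.cong refl)
        fix x assume "x \<in> {KQ - 1..<KQ - 1 + i}"
        hence "x < N + R - 1" using i KP_props(1) KQ_props(1) by auto
        thus "(Zm *\<^sub>v \<beta>) $ x = wfun \<beta> (int x + 2 - int KQ)" by (rule Zm_vec[OF b])
      qed
      also have "\<dots> = (\<Sum>e\<in>{1..int i}. wfun \<beta> e)"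
        by (rule sum.reindex_bij_witness[of _ "\<lambda>e. nat (e + int KQ - 2)" "\<lambda>m0. int m0 + 2 - int KQ"])
          (use KQ_props(1) in auto)
      finally show ?thesis .
    qed
    show ?thesis using r1 r2 r3 by simp
  qed
  finally show ?thesis .
qed

end



context leapz begin

lemma M_carrier: "Am i * Zm \<in> carrier_mat R R"
  using Am_carrier[of i] Zm_carrier nc_R by auto

lemma vec_bound:
  assumes b: "\<beta> \<in> carrier_vec nc"
    and rows: "\<forall>a0<R. a0 \<noteq> KQ - 1 \<longrightarrow> ((Am N * Zm) *\<^sub>v \<beta>) $ a0 = 0"
  shows "\<forall>e. 2 - int KQ \<le> e \<and> e \<le> 0 \<longrightarrow> wfun \<beta> e = 0"
    "\<forall>e. int N + 1 \<le> e \<and> e \<le> int N + int KP - 1 \<longrightarrow> wfun \<beta> e = 0"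
proof -
  show "\<forall>e. 2 - int KQ \<le> e \<and> e \<le> 0 \<longrightarrow> wfun \<beta> e = 0"
  proof (intro allI impI)
  fix e assume e: "2 - int KQ \<le> e \<and> e \<le> 0"
  define a0 where "a0 = nat (e + int KQ - 2)"
  have a: "a0 < KQ - 1" "a0 < R" "int a0 + 2 - int KQ = e" using e KP_props(1) unfolding a0_def by auto
  have "((Am N * Zm) *\<^sub>v \<beta>) $ a0 = wfun \<beta> e" using AZ_vec[OF b a(2), of N] a by simp
  thus "wfun \<beta> e = 0" using rows a by simp
  qed
  show "\<forall>e. int N + 1 \<le> e \<and> e \<le> int N + int KP - 1 \<longrightarrow> wfun \<beta> e = 0"
  proof (intro allI impI)
  fix e assume e: "int N + 1 \<le> e \<and> e \<le> int N + int KP - 1"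
  define a0 where "a0 = nat (e - int N - 1 + int KQ)"
  have a: "\<not> a0 < KQ - 1" "a0 \<noteq> KQ - 1" "a0 < R" "int N + int a0 + 1 - int KQ = e"
    using e KP_props(1) KQ_props(1) unfolding a0_def by auto
  have "((Am N * Zm) *\<^sub>v \<beta>) $ a0 = wfun \<beta> e" using AZ_vec[OF b a(3), of N] a by simp
  thus "wfun \<beta> e = 0" using rows a by simp
  qed
qed

lemma vec_harm:
  assumes b: "\<beta> \<in> carrier_vec nc"
    and rows: "\<forall>a0<R. a0 \<noteq> KQ - 1 \<longrightarrow> ((Am N * Zm) *\<^sub>v \<beta>) $ a0 = 0"
  shows "\<forall>i. 0 < i \<and> i < N \<longrightarrow> (\<Sum>e\<in>{1..int i}. wfun \<beta> e) =
      (\<Sum>j\<le>N. P i j *\<^sub>R (\<Sum>e\<in>{1..int j}. wfun \<beta> e))"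
  by (rule rec_harm) (use wfun_rec vec_bound[OF b rows] in auto)

lemma hN_val:
  assumes b: "\<beta> \<in> carrier_vec nc" and i: "i \<le> N"
  shows "(\<Sum>e\<in>{1..int i}. wfun \<beta> e) = ((Am i * Zm) *\<^sub>v \<beta>) $ (KQ - 1)"
  using AZ_vec[OF b _ i, of "KQ - 1"] KP_props(1) KQ_props(1) by simp

lemma det_nz: "det (Am N * Zm) \<noteq> 0"
proof
  assume "det (Am N * Zm) = 0"
  then obtain \<beta> where b: "\<beta> \<in> carrier_vec R" "\<beta> \<noteq> 0\<^sub>v R" "(Am N * Zm) *\<^sub>v \<beta> = 0\<^sub>v R"
    using det_0_iff_vec_prod_zero_field[OF M_carrier] by blast
  have bc: "\<beta> \<in> carrier_vec nc" using b nc_R by simp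
  have rows: "\<forall>a0<R. a0 \<noteq> KQ - 1 \<longrightarrow> ((Am N * Zm) *\<^sub>v \<beta>) $ a0 = 0" using b by simp
  define h where "h j = (\<Sum>e\<in>{1..int j}. wfun \<beta> e)" for j
  have hz: "\<forall>i\<le>N. h i = 0"
  proof (rule harm_zero)
    show "h 0 = 0" unfolding h_def by simp
    have "h N = ((Am N * Zm) *\<^sub>v \<beta>) $ (KQ - 1)" unfolding h_def by (rule hN_val[OF bc]) simp
    also have "\<dots> = 0" using b KP_props(1) KQ_props(1) by simp
    finally show "h N = 0" .
    show "\<forall>i. 0 < i \<and> i < N \<longrightarrow> h i = (\<Sum>j\<le>N. P i j *\<^sub>R h j)"
      unfolding h_def by (rule vec_harm[OF bc rows])
  qed
  have mid: "wfun \<beta> e = 0" if e: "1 \<le> e" "e \<le> int N" for e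
  proof -
    have "{1..e} = insert e {1..e - 1}" using e by auto
    hence "h (nat e) = wfun \<beta> e + h (nat (e - 1))" using e unfolding h_def by simp
    moreover have "h (nat e) = 0" "h (nat (e - 1)) = 0" using hz e by auto
    ultimately show ?thesis by simp
  qed
  have "\<forall>i0 < N + R - 1. wfun \<beta> (int i0 + 2 - int KQ) = 0"
  proof (intro allI impI)
    fix i0 assume i0: "i0 < N + R - 1"
    consider "int i0 + 2 - int KQ \<le> 0" | "1 \<le> int i0 + 2 - int KQ \<and> int i0 + 2 - int KQ \<le> int N"
      | "int N + 1 \<le> int i0 + 2 - int KQ" by linarith
    then show "wfun \<beta> (int i0 + 2 - int KQ) = 0"
    proof cases
      case 1 then show ?thesis using vec_bound(1)[OF bc rows] by simp
    next
      case 2 then show ?thesis using mid by simp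
    next
      case 3
      have "int i0 + 2 - int KQ \<le> int N + int KP - 1" using i0 KP_props(1) KQ_props(1) by linarith
      then show ?thesis using vec_bound(2)[OF bc rows] 3 by simp
    qed
  qed
  hence "\<beta> = 0\<^sub>v nc" by (rule indep_cols[OF bc])
  thus False using b nc_R by simp
qed

end



context leapz begin

lemma Am_dims[simp]: "dim_row (Am i) = R" "dim_col (Am i) = N + R - 1"
  unfolding accordion_def by simp_all

lemma Zm_dims[simp]: "dim_row Zm = N + R - 1" "dim_col Zm = nc"
  unfolding Z_mat_def by simp_all

lemma dims_suc[simp]: "dim_row (accordion KQ KP N i) = KP + KQ - Suc 0"
  "dim_col (accordion KQ KP N i) = N + (KP + KQ - Suc 0) - Suc 0"
  "dim_row (Z_mat KQ (KP + KQ - Suc 0) N chi zs) = N + (KP + KQ - Suc 0) - Suc 0"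
  "dim_col (Z_mat KQ (KP + KQ - Suc 0) N chi zs) = nc"
  unfolding Z_mat_def accordion_def by simp_all

lemma AZ_index: "r < R \<Longrightarrow> c < R \<Longrightarrow> (Am i * Zm) $$ (r, c) = (\<Sum>m<N + R - 1. Am i $$ (r, m) * Zm $$ (m, c))"
proof -
  assume r: "r < R" and c: "c < R"
  have "(Am i * Zm) $$ (r, c) = row (Am i) r \<bullet> col Zm c"
    by (rule index_mult_mat(1)) (use r c nc_R in simp_all)
  also have "\<dots> = (\<Sum>m<N + R - 1. Am i $$ (r, m) * Zm $$ (m, c))"
    unfolding scalar_prod_def using r c nc_R by (auto simp: atLeast0LessThan intro!: sum.cong)
  finally show ?thesis .
qed

lemma rows_eq: assumes "r < R" "r \<noteq> KQ - 1" "c < R"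
  shows "(Am i * Zm) $$ (r, c) = (Am N * Zm) $$ (r, c)"
proof -
  have "r + 1 \<noteq> KQ" using assms KQ_props(1) by auto
  hence "Am i $$ (r, m) = Am N $$ (r, m)" if "m < N + R - 1" for m
    using assms that by (simp add: Am_index)
  thus ?thesis using AZ_index[OF assms(1) assms(3), of i] AZ_index[OF assms(1) assms(3), of N] by simp
qed

lemma cofactor_eq: assumes c: "c < R"
  shows "cofactor (Am i * Zm) (KQ - 1) c = cofactor (Am N * Zm) (KQ - 1) c"
proof -
  have "mat_delete (Am i * Zm) (KQ - 1) c = mat_delete (Am N * Zm) (KQ - 1) c"
  proof (rule eq_matI)
    show "dim_row (mat_delete (Am i * Zm) (KQ - 1) c) = dim_row (mat_delete (Am N * Zm) (KQ - 1) c)"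
      using M_carrier[of i] M_carrier[of N] by simp
    show "dim_col (mat_delete (Am i * Zm) (KQ - 1) c) = dim_col (mat_delete (Am N * Zm) (KQ - 1) c)"
      using M_carrier[of i] M_carrier[of N] by simp
    fix r c' assume r: "r < dim_row (mat_delete (Am N * Zm) (KQ - 1) c)"
      and c': "c' < dim_col (mat_delete (Am N * Zm) (KQ - 1) c)"
    have dr: "r < R - 1" "c' < R - 1" using r c' M_carrier[of N] by auto
    define r1 where "r1 = (if r < KQ - 1 then r else Suc r)"
    define c1 where "c1 = (if c' < c then c' else Suc c')"
    have h: "r1 < R" "r1 \<noteq> KQ - 1" "c1 < R" using dr unfolding r1_def c1_def by auto
    show "mat_delete (Am i * Zm) (KQ - 1) c $$ (r, c') = mat_delete (Am N * Zm) (KQ - 1) c $$ (r, c')"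
      using dr M_carrier[of i] M_carrier[of N] rows_eq[OF h]
      unfolding mat_delete_def r1_def c1_def by auto
  qed
  thus ?thesis unfolding cofactor_def by simp
qed

lemma formula: assumes i: "i \<le> N"
  shows "complex_of_real (u i) = det (Am i * Zm) / det (Am N * Zm)"
proof -
  define M where "M = Am N * Zm"
  define dM where "dM = det M"
  have Mc: "M \<in> carrier_mat R R" unfolding M_def by (rule M_carrier)
  have dM: "dM \<noteq> 0" unfolding dM_def M_def by (rule det_nz)
  define \<alpha> where "\<alpha> = vec R (\<lambda>c. cofactor M (KQ - 1) c / dM)"
  have ac: "\<alpha> \<in> carrier_vec nc" unfolding \<alpha>_def using nc_R by simp
  have kq: "KQ - 1 < R" using KP_props(1) KQ_props(1) by simp
  have Ma: "(M *\<^sub>v \<alpha>) $ r = (if r = KQ - 1 then 1 else 0)" if r: "r < R" for r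
  proof -
    have "(M *\<^sub>v \<alpha>) $ r = (\<Sum>c<R. M $$ (r, c) * (cofactor M (KQ - 1) c / dM))"
      using Mc r unfolding \<alpha>_def by (auto simp: scalar_prod_def atLeast0LessThan intro!: sum.cong)
    also have "\<dots> = (M * adj_mat M) $$ (r, KQ - 1) / dM"
      using Mc r kq adj_mat(1)[OF Mc]
      by (auto simp: scalar_prod_def atLeast0LessThan sum_divide_distrib adj_mat_def intro!: sum.cong)
    also have "\<dots> = (if r = KQ - 1 then 1 else 0)"
      unfolding adj_mat(2)[OF Mc] using r kq dM unfolding dM_def by simp
    finally show ?thesis .
  qed
  have rows: "\<forall>a0<R. a0 \<noteq> KQ - 1 \<longrightarrow> ((Am N * Zm) *\<^sub>v \<alpha>) $ a0 = 0"
    using Ma unfolding M_def by simp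
  define h where "h j = (\<Sum>e\<in>{1..int j}. wfun \<alpha> e)" for j
  define d where "d j = complex_of_real (u j) - h j" for j
  have dz: "\<forall>i\<le>N. d i = 0"
  proof (rule harm_zero)
    show "d 0 = 0" unfolding d_def h_def using u_0 by simp
    have "h N = ((Am N * Zm) *\<^sub>v \<alpha>) $ (KQ - 1)" unfolding h_def by (rule hN_val[OF ac]) simp
    also have "\<dots> = 1" using Ma[OF kq] unfolding M_def by simp
    finally show "d N = 0" unfolding d_def using u_N by simp
    show "\<forall>i. 0 < i \<and> i < N \<longrightarrow> d i = (\<Sum>j\<le>N. P i j *\<^sub>R d j)"
    proof (intro allI impI)
      fix i assume ii: "0 < i \<and> i < N"
      have hh: "h i = (\<Sum>j\<le>N. P i j *\<^sub>R h j)" using vec_harm[OF ac rows] ii unfolding h_def by blast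
      have "complex_of_real (u i) = complex_of_real (\<Sum>j\<le>N. P i j * u j)" using u_harm ii by simp
      also have "\<dots> = (\<Sum>j\<le>N. P i j *\<^sub>R complex_of_real (u j))"
        by (simp add: scaleR_conv_of_real)
      finally show "d i = (\<Sum>j\<le>N. P i j *\<^sub>R d j)"
        unfolding d_def hh by (simp add: scaleR_diff_right sum_subtractf)
    qed
  qed
  have "complex_of_real (u i) = h i" using dz i unfolding d_def by simp
  also have "\<dots> = ((Am i * Zm) *\<^sub>v \<alpha>) $ (KQ - 1)" unfolding h_def by (rule hN_val[OF ac i])
  also have "\<dots> = (\<Sum>c<R. (Am i * Zm) $$ (KQ - 1, c) * (cofactor M (KQ - 1) c / dM))"
  proof -
    have "((Am i * Zm) *\<^sub>v \<alpha>) $ (KQ - 1) = row (Am i * Zm) (KQ - 1) \<bullet> \<alpha>"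
      by (rule index_mult_mat_vec) (use kq in simp)
    also have "\<dots> = (\<Sum>c<R. (Am i * Zm) $$ (KQ - 1, c) * (cofactor M (KQ - 1) c / dM))"
      unfolding scalar_prod_def \<alpha>_def using kq nc_R by (auto simp: atLeast0LessThan intro!: sum.cong)
    finally show ?thesis .
  qed
  also have "\<dots> = (\<Sum>c<R. (Am i * Zm) $$ (KQ - 1, c) * cofactor (Am i * Zm) (KQ - 1) c) / dM"
    unfolding M_def sum_divide_distrib
  proof (intro sum.cong refl)
    fix c assume "c \<in> {..<R}"
    hence c: "c < R" by simp
    show "(Am i * Zm) $$ (KQ - 1, c) * (cofactor (Am N * Zm) (KQ - 1) c / dM) =
      (Am i * Zm) $$ (KQ - 1, c) * cofactor (Am i * Zm) (KQ - 1) c / dM"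
      using cofactor_eq[OF c, of i] by simp
  qed
  also have "(\<Sum>c<R. (Am i * Zm) $$ (KQ - 1, c) * cofactor (Am i * Zm) (KQ - 1) c) = det (Am i * Zm)"
    by (rule laplace_expansion_row[OF M_carrier kq, symmetric])
  finally show ?thesis unfolding dM_def M_def .
qed

end

theorem mainTheorem2:
  fixes k N :: nat and p q :: "nat \<Rightarrow> real" and zs :: "complex list"
  assumes "k \<ge> 1"
    and "\<forall>j\<in>{1..k}. p j \<ge> 0" and "\<forall>j\<in>{1..k}. q j \<ge> 0"
    and "(\<Sum>j=1..k. p j + q j) = 1"
    and "(\<Sum>j=1..k. p j) > 0" and "(\<Sum>j=1..k. q j) > 0"
    and "N \<ge> kp k p + kq k q"
    and "distinct zs"
    and "set zs = {z. z \<noteq> 0 \<and> poly (char_poly k p q) z = 0}"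
  shows "det (accordion (kq k q) (kp k p) N N * Z_mat (kq k q) (kp k p + kq k q - 1) N (char_poly k p q) zs) \<noteq> 0
    \<and> (\<forall>i\<in>{0..N}. complex_of_real (absorb_prob k p q N i) =
         det (accordion (kq k q) (kp k p) N i * Z_mat (kq k q) (kp k p + kq k q - 1) N (char_poly k p q) zs)
       / det (accordion (kq k q) (kp k p) N N * Z_mat (kq k q) (kp k p + kq k q - 1) N (char_poly k p q) zs))"
proof -
  interpret leapz k N p q zs
    using assms by unfold_locales auto
  show ?thesis using det_nz formula by auto
qed

end
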